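(* Let $p$ be a prime, $r\ge1$, $G_0$ a finite group, $K$ a field containing a primitive $p^r$-th root of unity $\zeta$, and $\beta\in H^2(G_0,K^\times)$ such that $K^\beta G_0$ is a division algebra with center $K$. Let $k=K((s))((t))$ and $D=(K^\beta G_0\otimes_K k)\otimes_k(s,t)_{p^r}$. Then $D$ is a central division $k$-algebra, and $D\cong k^\alpha(G_0\times Z_{p^r}\times Z_{p^r})$ for some $\alpha\in H^2(G_0\times Z_{p^r}\times Z_{p^r},k^\times)$ whose restriction to $G_0$ is (the image of) $\beta$.
   Context: $(s,t)_{p^r}$ is the symbol algebra over $k$ generated by $x,y$ with $x^{p^r}=s$, $y^{p^r}=t$, $xy=\zeta yx$. Twisted group algebras $K^\beta G$ are taken with trivial action of $G$ on $K^\times$. $Z_m$ is the cyclic group of order $m$. *)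

theory Defs
  imports "HOL-Algebra.Elementary_Groups" "HOL-Computational_Algebra.Formal_Laurent_Series"
begin

text \<open>An algebra over a field 'k with finite basis B and structure constants c:
  the product of basis vectors is  e_i e_j = sum_m c i j m e_m.
  Elements are coordinate functions B -> 'k (zero outside B).\<close>

definition sc_carrier :: "'b set \<Rightarrow> ('b \<Rightarrow> 'k::zero) set" where
  "sc_carrier B = {x. \<forall>i. i \<notin> B \<longrightarrow> x i = 0}"

definition sc_mult :: "'b set \<Rightarrow> ('b \<Rightarrow> 'b \<Rightarrow> 'b \<Rightarrow> 'k::comm_ring_1)
    \<Rightarrow> ('b \<Rightarrow> 'k) \<Rightarrow> ('b \<Rightarrow> 'k) \<Rightarrow> ('b \<Rightarrow> 'k)" where
  "sc_mult B c x y = (\<lambda>m. if m \<in> B then (\<Sum>i\<in>B. \<Sum>j\<in>B. x i * y j * c i j m) else 0)"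

definition sc_unit :: "'b set \<Rightarrow> ('b \<Rightarrow> 'b \<Rightarrow> 'b \<Rightarrow> 'k::comm_ring_1) \<Rightarrow> ('b \<Rightarrow> 'k) \<Rightarrow> bool" where
  "sc_unit B c e \<longleftrightarrow> e \<in> sc_carrier B \<and>
     (\<forall>x\<in>sc_carrier B. sc_mult B c e x = x \<and> sc_mult B c x e = x)"

definition sc_center :: "'b set \<Rightarrow> ('b \<Rightarrow> 'b \<Rightarrow> 'b \<Rightarrow> 'k::comm_ring_1) \<Rightarrow> ('b \<Rightarrow> 'k) set" where
  "sc_center B c = {z \<in> sc_carrier B. \<forall>x\<in>sc_carrier B. sc_mult B c z x = sc_mult B c x z}"

definition sc_division_algebra :: "'b set \<Rightarrow> ('b \<Rightarrow> 'b \<Rightarrow> 'b \<Rightarrow> 'k::field) \<Rightarrow> bool" where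
  "sc_division_algebra B c \<longleftrightarrow> finite B \<and>
     (\<forall>x\<in>sc_carrier B. \<forall>y\<in>sc_carrier B. \<forall>z\<in>sc_carrier B.
        sc_mult B c (sc_mult B c x y) z = sc_mult B c x (sc_mult B c y z)) \<and>
     (\<exists>e. sc_unit B c e \<and> e \<noteq> (\<lambda>_. 0) \<and>
        (\<forall>x\<in>sc_carrier B. x \<noteq> (\<lambda>_. 0) \<longrightarrow>
           (\<exists>y\<in>sc_carrier B. sc_mult B c x y = e \<and> sc_mult B c y x = e)))"

definition sc_central_division_algebra :: "'b set \<Rightarrow> ('b \<Rightarrow> 'b \<Rightarrow> 'b \<Rightarrow> 'k::field) \<Rightarrow> bool" where
  "sc_central_division_algebra B c \<longleftrightarrow> sc_division_algebra B c \<and>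
     (\<forall>e. sc_unit B c e \<longrightarrow> sc_center B c = {(\<lambda>i. a * e i) | a. True})"

definition sc_iso :: "'b set \<Rightarrow> ('b \<Rightarrow> 'b \<Rightarrow> 'b \<Rightarrow> 'k::field)
    \<Rightarrow> 'd set \<Rightarrow> ('d \<Rightarrow> 'd \<Rightarrow> 'd \<Rightarrow> 'k) \<Rightarrow> bool" where
  "sc_iso B1 c1 B2 c2 \<longleftrightarrow> (\<exists>\<phi>. bij_betw \<phi> (sc_carrier B1) (sc_carrier B2) \<and>
     (\<forall>x\<in>sc_carrier B1. \<forall>y\<in>sc_carrier B1.
        \<phi> (\<lambda>i. x i + y i) = (\<lambda>j. \<phi> x j + \<phi> y j) \<and>
        \<phi> (sc_mult B1 c1 x y) = sc_mult B2 c2 (\<phi> x) (\<phi> y)) \<and>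
     (\<forall>a. \<forall>x\<in>sc_carrier B1. \<phi> (\<lambda>i. a * x i) = (\<lambda>j. a * \<phi> x j)))"

definition sc_tensor :: "('b \<Rightarrow> 'b \<Rightarrow> 'b \<Rightarrow> 'k::comm_ring_1) \<Rightarrow> ('d \<Rightarrow> 'd \<Rightarrow> 'd \<Rightarrow> 'k)
    \<Rightarrow> ('b \<times> 'd) \<Rightarrow> ('b \<times> 'd) \<Rightarrow> ('b \<times> 'd) \<Rightarrow> 'k" where
  "sc_tensor c1 c2 = (\<lambda>(i,j) (i',j') (m,m'). c1 i i' m * c2 j j' m')"

definition sc_base_change :: "('K \<Rightarrow> 'k) \<Rightarrow> ('b \<Rightarrow> 'b \<Rightarrow> 'b \<Rightarrow> 'K) \<Rightarrow> ('b \<Rightarrow> 'b \<Rightarrow> 'b \<Rightarrow> 'k)" where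
  "sc_base_change f c = (\<lambda>i j m. f (c i j m))"

definition cocycle2 :: "('g, 'x) monoid_scheme \<Rightarrow> ('g \<Rightarrow> 'g \<Rightarrow> 'k::field) \<Rightarrow> bool" where
  "cocycle2 G \<alpha> \<longleftrightarrow>
     (\<forall>g\<in>carrier G. \<forall>h\<in>carrier G. \<alpha> g h \<noteq> 0) \<and>
     (\<forall>g\<in>carrier G. \<forall>h\<in>carrier G. \<forall>l\<in>carrier G.
        \<alpha> g h * \<alpha> (g \<otimes>\<^bsub>G\<^esub> h) l = \<alpha> h l * \<alpha> g (h \<otimes>\<^bsub>G\<^esub> l))"

definition twisted_sc :: "('g, 'x) monoid_scheme \<Rightarrow> ('g \<Rightarrow> 'g \<Rightarrow> 'k::zero)
    \<Rightarrow> 'g \<Rightarrow> 'g \<Rightarrow> 'g \<Rightarrow> 'k" where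
  "twisted_sc G \<alpha> = (\<lambda>g h m. if m = g \<otimes>\<^bsub>G\<^esub> h then \<alpha> g h else 0)"

text \<open>Symbol algebra (s,t)_n over k w.r.t. \<zeta>: generated by x,y with x^n = s, y^n = t,
  x y = \<zeta> y x; basis x^i y^j (0 \<le> i,j < n). Since y^j x^a = \<zeta>^(-ja) x^a y^j,
  x^i y^j * x^a y^b = \<zeta>^(-ja) x^(i+a) y^(j+b).\<close>
definition symbol_basis :: "nat \<Rightarrow> (nat \<times> nat) set" where
  "symbol_basis n = {0..<n} \<times> {0..<n}"

definition symbol_sc :: "nat \<Rightarrow> 'k::field \<Rightarrow> 'k \<Rightarrow> 'k
    \<Rightarrow> (nat \<times> nat) \<Rightarrow> (nat \<times> nat) \<Rightarrow> (nat \<times> nat) \<Rightarrow> 'k" where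
  "symbol_sc n \<zeta> s t = (\<lambda>(i,j) (a,b) (m,m').
     if m = (i + a) mod n \<and> m' = (j + b) mod n
     then inverse \<zeta> ^ (j * a) * (if n \<le> i + a then s else 1) * (if n \<le> j + b then t else 1)
     else 0)"

definition emb_KK :: "'a::field \<Rightarrow> 'a fls fls" where
  "emb_KK a = fls_const (fls_const a)"

definition var_s :: "'a::field fls fls" where
  "var_s = fls_const fls_X"

definition var_t :: "'a::field fls fls" where
  "var_t = fls_X"

end

theory Submission
  imports Defs "HOL-Library.Function_Algebras"
begin

unbundle fps_syntax

definition fsc :: "'k::field \<Rightarrow> ('b \<Rightarrow> 'k) \<Rightarrow> ('b \<Rightarrow> 'k)" where
  "fsc a f = (\<lambda>i. a * f i)"

lemma fun_sum_apply: "(sum f A) j = (\<Sum>i\<in>A. f i j)"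
  by (induction A rule: infinite_finite_induct) auto

lemma vs_fsc: "vector_space (fsc :: 'k::field \<Rightarrow> ('b \<Rightarrow> 'k) \<Rightarrow> _)"
  by unfold_locales (auto simp: fsc_def fun_eq_iff algebra_simps)

lemma lin_inj_surj:
  fixes L :: "('b \<Rightarrow> 'k::field) \<Rightarrow> ('b \<Rightarrow> 'k)"
  assumes fin: "finite B"
    and add: "\<And>x y. L (x + y) = L x + L y"
    and scl: "\<And>a x. L (fsc a x) = fsc a (L x)"
    and into: "\<And>x. x \<in> sc_carrier B \<Longrightarrow> L x \<in> sc_carrier B"
    and inj: "inj_on L (sc_carrier B)"
    and e: "e \<in> sc_carrier B"
  shows "\<exists>y\<in>sc_carrier B. L y = e"
proof -
  interpret vector_space "fsc :: 'k \<Rightarrow> ('b \<Rightarrow> 'k) \<Rightarrow> _" by (rule vs_fsc)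
  interpret lin: Vector_Spaces.linear "fsc :: 'k \<Rightarrow> ('b \<Rightarrow> 'k) \<Rightarrow> _" fsc L
    by (simp add: module_hom_iff_linear[symmetric] module_hom_def module_hom_axioms_def
          module_iff_vector_space vs_fsc add scl)
  define V :: "('b \<Rightarrow> 'k) set" where "V = sc_carrier B"
  have subV: "subspace V"
    unfolding subspace_def V_def sc_carrier_def fsc_def by auto
  define T :: "('b \<Rightarrow> 'k) set" where "T = (\<lambda>i j. if j = i then (1::'k) else 0) ` B"
  have finT: "finite T" using fin by (simp add: T_def)
  have VT: "V \<subseteq> span T"
  proof
    fix x assume x: "x \<in> V"
    have "x = (\<Sum>i\<in>B. fsc (x i) (\<lambda>j. if j = i then 1 else 0))"
    proof
      fix j
      show "x j = (\<Sum>i\<in>B. fsc (x i) (\<lambda>j. if j = i then 1 else 0)) j"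
        using x fin by (auto simp: V_def sc_carrier_def fsc_def fun_sum_apply if_distrib cong: if_cong)
    qed
    also have "\<dots> \<in> span T"
      by (intro span_sum span_scale span_base) (auto simp: T_def)
    finally show "x \<in> span T" .
  qed
  obtain C where C: "C \<subseteq> V" "independent C" "V \<subseteq> span C" "card C = dim V"
    using basis_exists by blast
  have finC: "finite C" using independent_span_bound[OF finT C(2)] C(1) VT by auto
  have spC: "span C = V" using C(1) C(3) span_minimal[OF C(1) subV] by auto
  have injC: "inj_on L (span C)" using inj spC V_def by simp
  have indep: "independent (L ` C)"
    using lin.independent_injective_image[OF C(2) injC] .
  have card: "card (L ` C) = dim V"
    using card_image[OF inj_on_subset[OF inj]] C(1,4) V_def by auto
  have LCV: "L ` C \<subseteq> V" using C(1) into V_def by auto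
  obtain B' where B': "L ` C \<subseteq> B'" "B' \<subseteq> V" "independent B'" "V \<subseteq> span B'"
    using maximal_independent_subset_extend[OF LCV indep] by blast
  have finB': "finite B'" using independent_span_bound[OF finT B'(3)] B'(2) VT by auto
  have "card B' = dim V" using basis_card_eq_dim[OF B'(2,4,3)] .
  hence "B' = L ` C" using card B'(1) finB' by (metis card_subset_eq)
  hence "V \<subseteq> span (L ` C)" using B'(4) by simp
  also have "span (L ` C) = L ` span C" by (rule lin.span_image)
  finally show ?thesis using e spC V_def by auto
qed

definition tw :: "('b \<Rightarrow> 'b \<Rightarrow> 'b) \<Rightarrow> ('b \<Rightarrow> 'b \<Rightarrow> 'k::zero) \<Rightarrow> 'b \<Rightarrow> 'b \<Rightarrow> 'b \<Rightarrow> 'k" where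
  "tw op \<gamma> u v w = (if w = op u v then \<gamma> u v else 0)"

lemma sc_mult_tw:
  "sc_mult B (tw op \<gamma>) x y m =
    (if m \<in> B then (\<Sum>u\<in>B. \<Sum>v\<in>B. if op u v = m then x u * y v * \<gamma> u v else 0) else 0)"
  unfolding sc_mult_def tw_def by (auto intro!: sum.cong)

lemma sc_mult_in: "sc_mult B c x y \<in> sc_carrier B"
  by (simp add: sc_mult_def sc_carrier_def)

lemma sc_mult_add_right: "sc_mult B c x (y + z) = sc_mult B c x y + sc_mult B c x z"
  by (auto simp: sc_mult_def fun_eq_iff algebra_simps sum.distrib)

lemma sc_mult_diff_right: "sc_mult B c x (\<lambda>i. y i - z i) = (\<lambda>m. sc_mult B c x y m - sc_mult B c x z m)"
  by (auto simp: sc_mult_def fun_eq_iff algebra_simps sum_subtractf)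

lemma sc_mult_fsc_right: "sc_mult B c x (fsc a y) = fsc a (sc_mult B c x y)"
  by (auto simp: sc_mult_def fun_eq_iff fsc_def sum_distrib_left algebra_simps)

lemma sc_mult_zero_right: "sc_mult B c x (\<lambda>_. 0) = (\<lambda>_. 0)"
  by (auto simp: sc_mult_def fun_eq_iff)

definition sc_domain :: "'b set \<Rightarrow> ('b \<Rightarrow> 'b \<Rightarrow> 'b \<Rightarrow> 'k::comm_ring_1) \<Rightarrow> bool" where
  "sc_domain B c \<longleftrightarrow> (\<forall>x\<in>sc_carrier B. \<forall>y\<in>sc_carrier B. x \<noteq> (\<lambda>_. 0) \<longrightarrow> y \<noteq> (\<lambda>_. 0)
      \<longrightarrow> sc_mult B c x y \<noteq> (\<lambda>_. 0))"

lemma domain_inverse: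
  fixes c :: "'b \<Rightarrow> 'b \<Rightarrow> 'b \<Rightarrow> 'k::field"
  assumes fin: "finite B"
    and assoc: "\<forall>x\<in>sc_carrier B. \<forall>y\<in>sc_carrier B. \<forall>z\<in>sc_carrier B.
        sc_mult B c (sc_mult B c x y) z = sc_mult B c x (sc_mult B c y z)"
    and unit: "sc_unit B c e" and dom: "sc_domain B c"
    and x: "x \<in> sc_carrier B" "x \<noteq> (\<lambda>_. 0)"
  shows "\<exists>y\<in>sc_carrier B. sc_mult B c x y = e \<and> sc_mult B c y x = e"
proof -
  have e: "e \<in> sc_carrier B" using unit by (simp add: sc_unit_def)
  have cancel: "y = z" if "y \<in> sc_carrier B" "z \<in> sc_carrier B" "sc_mult B c x y = sc_mult B c x z" for y z
  proof (rule ccontr)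
    assume "y \<noteq> z"
    hence "(\<lambda>i. y i - z i) \<noteq> (\<lambda>_. 0)" by (auto simp: fun_eq_iff)
    moreover have "(\<lambda>i. y i - z i) \<in> sc_carrier B" using that by (auto simp: sc_carrier_def)
    ultimately have "sc_mult B c x (\<lambda>i. y i - z i) \<noteq> (\<lambda>_. 0)"
      using dom x unfolding sc_domain_def by blast
    thus False using that(3) by (simp add: sc_mult_diff_right)
  qed
  have "\<exists>y\<in>sc_carrier B. sc_mult B c x y = e"
    by (rule lin_inj_surj[OF fin sc_mult_add_right sc_mult_fsc_right sc_mult_in _ e])
       (auto intro: inj_onI cancel)
  then obtain y where y: "y \<in> sc_carrier B" "sc_mult B c x y = e" by blast
  have "sc_mult B c x (sc_mult B c y x) = sc_mult B c (sc_mult B c x y) x"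
    using assoc x y by metis
  also have "\<dots> = x" using y unit x by (simp add: sc_unit_def)
  also have "\<dots> = sc_mult B c x e" using unit x by (simp add: sc_unit_def)
  finally have "sc_mult B c y x = e" using cancel sc_mult_in e by blast
  thus ?thesis using y by blast
qed

lemma sum_delta_B:
  assumes "a \<in> B" "finite B"
  shows "(\<Sum>w\<in>B. if a = w then f w else 0) = (f a :: 'k::comm_monoid_add)"
  using assms by (simp add: sum.delta')

lemma sum_delta_P:
  assumes "a \<in> B" "finite B"
  shows "(\<Sum>t\<in>B. if P t then (if a = t then f t else 0) else 0) = (if P a then f a else (0 :: 'k::comm_monoid_add))"
proof -
  have "(\<Sum>t\<in>B. if P t then (if a = t then f t else 0) else 0) = (\<Sum>t\<in>B. if a = t then (if P t then f t else 0) else 0)"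
    by (intro sum.cong) auto
  also have "\<dots> = (if P a then f a else 0)" using assms by (simp add: sum.delta')
  finally show ?thesis .
qed

lemma sum_rot3: "(\<Sum>t\<in>B. \<Sum>v\<in>B. \<Sum>w\<in>B. F t v w) = (\<Sum>v\<in>B. \<Sum>w\<in>B. \<Sum>t\<in>B. (F t v w :: 'k::comm_monoid_add))"
proof -
  have "(\<Sum>t\<in>B. \<Sum>v\<in>B. \<Sum>w\<in>B. F t v w) = (\<Sum>v\<in>B. \<Sum>t\<in>B. \<Sum>w\<in>B. F t v w)"
    by (rule sum.swap)
  also have "\<dots> = (\<Sum>v\<in>B. \<Sum>w\<in>B. \<Sum>t\<in>B. F t v w)"
    by (rule sum.cong[OF refl], rule sum.swap)
  finally show ?thesis .
qed

lemma sum_swap4: "(\<Sum>t\<in>B. \<Sum>w\<in>B. \<Sum>u\<in>B. \<Sum>v\<in>B. F t w u v) = (\<Sum>u\<in>B. \<Sum>v\<in>B. \<Sum>w\<in>B. \<Sum>t\<in>B. (F t w u v :: 'k::comm_monoid_add))"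
proof -
  have "(\<Sum>t\<in>B. \<Sum>w\<in>B. \<Sum>u\<in>B. \<Sum>v\<in>B. F t w u v) = (\<Sum>w\<in>B. \<Sum>u\<in>B. \<Sum>t\<in>B. \<Sum>v\<in>B. F t w u v)"
    by (rule sum_rot3)
  also have "\<dots> = (\<Sum>w\<in>B. \<Sum>u\<in>B. \<Sum>v\<in>B. \<Sum>t\<in>B. F t w u v)"
    by (rule sum.cong[OF refl], rule sum.cong[OF refl], rule sum.swap)
  also have "\<dots> = (\<Sum>u\<in>B. \<Sum>w\<in>B. \<Sum>v\<in>B. \<Sum>t\<in>B. F t w u v)"
    by (rule sum.swap)
  also have "\<dots> = (\<Sum>u\<in>B. \<Sum>v\<in>B. \<Sum>w\<in>B. \<Sum>t\<in>B. F t w u v)"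
    by (rule sum.cong[OF refl], rule sum.swap)
  finally show ?thesis .
qed

lemma if0_mult: "(if Q then a else 0) * c = (if Q then a * c else (0::'a::mult_zero))"
  and mult_if0: "c * (if Q then a else 0) = (if Q then c * a else (0::'a::mult_zero))"
  by auto

lemma tw_triple_left:
  fixes \<gamma> :: "'b \<Rightarrow> 'b \<Rightarrow> 'k::comm_ring_1"
  assumes fin: "finite B" and closed: "\<And>u v. u \<in> B \<Longrightarrow> v \<in> B \<Longrightarrow> op u v \<in> B" and m: "m \<in> B"
  shows "sc_mult B (tw op \<gamma>) (sc_mult B (tw op \<gamma>) x y) z m =
    (\<Sum>u\<in>B. \<Sum>v\<in>B. \<Sum>w\<in>B. if op (op u v) w = m then x u * y v * z w * (\<gamma> u v * \<gamma> (op u v) w) else 0)"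
proof -
  have "sc_mult B (tw op \<gamma>) (sc_mult B (tw op \<gamma>) x y) z m =
     (\<Sum>t\<in>B. \<Sum>w\<in>B. if op t w = m then (\<Sum>u\<in>B. \<Sum>v\<in>B. if op u v = t then x u * y v * \<gamma> u v else 0) * z w * \<gamma> t w else 0)"
    using m by (simp add: sc_mult_tw cong: if_cong)
  also have "\<dots> = (\<Sum>t\<in>B. \<Sum>w\<in>B. \<Sum>u\<in>B. \<Sum>v\<in>B. if op t w = m then (if op u v = t then x u * y v * z w * (\<gamma> u v * \<gamma> t w) else 0) else 0)"
    apply (intro sum.cong refl)
    subgoal for t w by (cases "op t w = m") (simp_all add: sum_distrib_right sum_distrib_left if0_mult mult_if0 mult_ac cong: if_cong)
    done
  also have "\<dots> = (\<Sum>u\<in>B. \<Sum>v\<in>B. \<Sum>w\<in>B. \<Sum>t\<in>B. if op t w = m then (if op u v = t then x u * y v * z w * (\<gamma> u v * \<gamma> t w) else 0) else 0)"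
    by (rule sum_swap4)
  also have "\<dots> = (\<Sum>u\<in>B. \<Sum>v\<in>B. \<Sum>w\<in>B. if op (op u v) w = m then x u * y v * z w * (\<gamma> u v * \<gamma> (op u v) w) else 0)"
    by (intro sum.cong refl, subst sum_delta_P) (auto intro: closed fin)
  finally show ?thesis .
qed

lemma tw_triple_right:
  fixes \<gamma> :: "'b \<Rightarrow> 'b \<Rightarrow> 'k::comm_ring_1"
  assumes fin: "finite B" and closed: "\<And>u v. u \<in> B \<Longrightarrow> v \<in> B \<Longrightarrow> op u v \<in> B" and m: "m \<in> B"
  shows "sc_mult B (tw op \<gamma>) x (sc_mult B (tw op \<gamma>) y z) m =
    (\<Sum>u\<in>B. \<Sum>v\<in>B. \<Sum>w\<in>B. if op u (op v w) = m then x u * y v * z w * (\<gamma> v w * \<gamma> u (op v w)) else 0)"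
proof -
  have "sc_mult B (tw op \<gamma>) x (sc_mult B (tw op \<gamma>) y z) m =
     (\<Sum>u\<in>B. \<Sum>t\<in>B. if op u t = m then x u * (\<Sum>v\<in>B. \<Sum>w\<in>B. if op v w = t then y v * z w * \<gamma> v w else 0) * \<gamma> u t else 0)"
    using m by (simp add: sc_mult_tw cong: if_cong)
  also have "\<dots> = (\<Sum>u\<in>B. \<Sum>t\<in>B. \<Sum>v\<in>B. \<Sum>w\<in>B. if op u t = m then (if op v w = t then x u * y v * z w * (\<gamma> v w * \<gamma> u t) else 0) else 0)"
    apply (intro sum.cong refl)
    subgoal for u t by (cases "op u t = m") (simp_all add: sum_distrib_right sum_distrib_left if0_mult mult_if0 mult_ac cong: if_cong)
    done
  also have "\<dots> = (\<Sum>u\<in>B. \<Sum>v\<in>B. \<Sum>w\<in>B. \<Sum>t\<in>B. if op u t = m then (if op v w = t then x u * y v * z w * (\<gamma> v w * \<gamma> u t) else 0) else 0)"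
    by (rule sum.cong[OF refl], rule sum_rot3)
  also have "\<dots> = (\<Sum>u\<in>B. \<Sum>v\<in>B. \<Sum>w\<in>B. if op u (op v w) = m then x u * y v * z w * (\<gamma> v w * \<gamma> u (op v w)) else 0)"
    by (intro sum.cong refl, subst sum_delta_P) (auto intro: closed fin)
  finally show ?thesis .
qed

lemma tw_assoc:
  fixes \<gamma> :: "'b \<Rightarrow> 'b \<Rightarrow> 'k::comm_ring_1"
  assumes fin: "finite B" and closed: "\<And>u v. u \<in> B \<Longrightarrow> v \<in> B \<Longrightarrow> op u v \<in> B"
    and assoc: "\<And>u v w. u \<in> B \<Longrightarrow> v \<in> B \<Longrightarrow> w \<in> B \<Longrightarrow> op (op u v) w = op u (op v w)"
    and cocy: "\<And>u v w. u \<in> B \<Longrightarrow> v \<in> B \<Longrightarrow> w \<in> B \<Longrightarrow>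
                 \<gamma> u v * \<gamma> (op u v) w = \<gamma> v w * \<gamma> u (op v w)"
  shows "sc_mult B (tw op \<gamma>) (sc_mult B (tw op \<gamma>) x y) z = sc_mult B (tw op \<gamma>) x (sc_mult B (tw op \<gamma>) y z)"
proof (rule ext)
  fix m
  show "sc_mult B (tw op \<gamma>) (sc_mult B (tw op \<gamma>) x y) z m = sc_mult B (tw op \<gamma>) x (sc_mult B (tw op \<gamma>) y z) m"
  proof (cases "m \<in> B")
    case True
    have l: "sc_mult B (tw op \<gamma>) (sc_mult B (tw op \<gamma>) x y) z m =
    (\<Sum>u\<in>B. \<Sum>v\<in>B. \<Sum>w\<in>B. if op (op u v) w = m then x u * y v * z w * (\<gamma> u v * \<gamma> (op u v) w) else 0)"
      by (rule tw_triple_left) (use closed fin True in auto)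
    have r: "sc_mult B (tw op \<gamma>) x (sc_mult B (tw op \<gamma>) y z) m =
    (\<Sum>u\<in>B. \<Sum>v\<in>B. \<Sum>w\<in>B. if op u (op v w) = m then x u * y v * z w * (\<gamma> v w * \<gamma> u (op v w)) else 0)"
      by (rule tw_triple_right) (use closed fin True in auto)
    show ?thesis unfolding l r
      by (intro sum.cong refl) (simp add: assoc cocy)
  next
    case False thus ?thesis by (simp add: sc_mult_tw)
  qed
qed

lemma tw_unit:
  fixes \<gamma> :: "'b \<Rightarrow> 'b \<Rightarrow> 'k::field"
  assumes fin: "finite B" and closed: "\<And>u v. u \<in> B \<Longrightarrow> v \<in> B \<Longrightarrow> op u v \<in> B"
    and e1: "e1 \<in> B" and lid: "\<And>v. v \<in> B \<Longrightarrow> op e1 v = v" and rid: "\<And>v. v \<in> B \<Longrightarrow> op v e1 = v"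
    and lcanc: "\<And>u v w. u \<in> B \<Longrightarrow> v \<in> B \<Longrightarrow> w \<in> B \<Longrightarrow> op u w = op v w \<Longrightarrow> u = v"
    and rcanc: "\<And>u v w. u \<in> B \<Longrightarrow> v \<in> B \<Longrightarrow> w \<in> B \<Longrightarrow> op w u = op w v \<Longrightarrow> u = v"
    and nz: "\<And>u v. u \<in> B \<Longrightarrow> v \<in> B \<Longrightarrow> \<gamma> u v \<noteq> 0"
    and cocy: "\<And>u v w. u \<in> B \<Longrightarrow> v \<in> B \<Longrightarrow> w \<in> B \<Longrightarrow>
                 \<gamma> u v * \<gamma> (op u v) w = \<gamma> v w * \<gamma> u (op v w)"
  shows "sc_unit B (tw op \<gamma>) (\<lambda>i. if i = e1 then inverse (\<gamma> e1 e1) else 0)"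
proof -
  let ?e = "\<lambda>i. if i = e1 then inverse (\<gamma> e1 e1) else 0"
  have g1: "\<gamma> e1 m = \<gamma> e1 e1" if "m \<in> B" for m
    using cocy[OF e1 e1 that] nz[OF e1 that] by (simp add: lid that e1 mult_cancel_right)
  have g2: "\<gamma> m e1 = \<gamma> e1 e1" if "m \<in> B" for m
    using cocy[OF that e1 e1] nz[OF that e1] by (simp add: rid that e1 mult_cancel_left)
  have L: "sc_mult B (tw op \<gamma>) ?e x = x" if x: "x \<in> sc_carrier B" for x
  proof
    fix m show "sc_mult B (tw op \<gamma>) ?e x m = x m"
    proof (cases "m \<in> B")
      case True
      have "sc_mult B (tw op \<gamma>) ?e x m = (\<Sum>u\<in>B. \<Sum>v\<in>B. if op u v = m then ?e u * x v * \<gamma> u v else 0)"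
        using True by (simp add: sc_mult_tw)
      also have "\<dots> = (\<Sum>u\<in>B. if e1 = u then (\<Sum>v\<in>B. if op e1 v = m then inverse (\<gamma> e1 e1) * x v * \<gamma> e1 v else 0) else 0)"
        apply (intro sum.cong refl)
        subgoal for u by (cases "u = e1") (simp_all cong: if_cong)
        done
      also have "\<dots> = (\<Sum>v\<in>B. if op e1 v = m then inverse (\<gamma> e1 e1) * x v * \<gamma> e1 v else 0)"
        using e1 fin by (simp add: sum.delta')
      also have "\<dots> = (\<Sum>v\<in>B. if m = v then x v else 0)"
        apply (intro sum.cong refl)
        subgoal for v using g1[of v] nz[OF e1 e1] lid[of v] by auto
        done
      also have "\<dots> = x m" using True fin by (simp add: sum.delta)
      finally show ?thesis .
    next
      case False thus ?thesis using x by (simp add: sc_mult_tw sc_carrier_def)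
    qed
  qed
  have R: "sc_mult B (tw op \<gamma>) x ?e = x" if x: "x \<in> sc_carrier B" for x
  proof
    fix m show "sc_mult B (tw op \<gamma>) x ?e m = x m"
    proof (cases "m \<in> B")
      case True
      have "sc_mult B (tw op \<gamma>) x ?e m = (\<Sum>u\<in>B. \<Sum>v\<in>B. if op u v = m then x u * ?e v * \<gamma> u v else 0)"
        using True by (simp add: sc_mult_tw)
      also have "\<dots> = (\<Sum>u\<in>B. \<Sum>v\<in>B. if e1 = v then (if op u e1 = m then x u * inverse (\<gamma> e1 e1) * \<gamma> u e1 else 0) else 0)"
        apply (intro sum.cong refl)
        subgoal for u v by (cases "v = e1") (simp_all cong: if_cong)
        done
      also have "\<dots> = (\<Sum>u\<in>B. if op u e1 = m then x u * inverse (\<gamma> e1 e1) * \<gamma> u e1 else 0)"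
        using e1 fin by (simp add: sum.delta')
      also have "\<dots> = (\<Sum>u\<in>B. if m = u then x u else 0)"
        apply (intro sum.cong refl)
        subgoal for u using g2[of u] nz[OF e1 e1] rid[of u] by auto
        done
      also have "\<dots> = x m" using True fin by (simp add: sum.delta)
      finally show ?thesis .
    next
      case False thus ?thesis using x by (simp add: sc_mult_tw sc_carrier_def)
    qed
  qed
  show ?thesis unfolding sc_unit_def using L R e1 by (auto simp: sc_carrier_def)
qed

lemma fls_const_inj: "fls_const a = fls_const b \<Longrightarrow> a = b"
  by (metis fls_const_nth)

lemma lb_mult_zero:
  fixes f g :: "'a::field fls" and n :: int
  assumes hf: "\<And>e. n * e + j < A \<Longrightarrow> f $$ e = 0"
    and hg: "\<And>e. n * e + b < A' \<Longrightarrow> g $$ e = 0"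
    and E: "n * E + j + b < A + A'"
  shows "(f * g) $$ E = 0"
proof -
  have "(f * g) $$ E = (\<Sum>i = fls_subdegree f..E - fls_subdegree g. f $$ i * g $$ (E - i))"
    by (rule fls_times_nth(2))
  also have "\<dots> = 0"
  proof (rule sum.neutral, rule ballI)
    fix i
    show "f $$ i * g $$ (E - i) = 0"
    proof (cases "n * i + j < A")
      case True thus ?thesis using hf by simp
    next
      case False
      have "n * (E - i) = n * E - n * i" by (simp add: right_diff_distrib)
      hence "n * (E - i) + b < A'" using False E by linarith
      thus ?thesis using hg by simp
    qed
  qed
  finally show ?thesis .
qed

lemma lead_mult:
  fixes f g :: "'a::field fls"
  assumes hf: "\<And>e. e < d1 \<Longrightarrow> f $$ e = 0" and hg: "\<And>e. e < d2 \<Longrightarrow> g $$ e = 0"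
  shows "(f * g) $$ (d1 + d2) = f $$ d1 * g $$ d2"
proof (cases "f = 0 \<or> g = 0")
  case True thus ?thesis by auto
next
  case False
  hence f0: "f \<noteq> 0" and g0: "g \<noteq> 0" by auto
  have sf: "d1 \<le> fls_subdegree f" by (rule fls_subdegree_geI[OF f0 hf])
  have sg: "d2 \<le> fls_subdegree g" by (rule fls_subdegree_geI[OF g0 hg])
  show ?thesis
  proof (cases "d1 < fls_subdegree f \<or> d2 < fls_subdegree g")
    case True
    hence "f $$ d1 = 0 \<or> g $$ d2 = 0" by (auto intro: fls_eq0_below_subdegree)
    moreover have "(f * g) $$ (d1 + d2) = 0"
      using True sf sg by (intro fls_times_nth_eq0) auto
    ultimately show ?thesis by auto
  next
    case False
    hence "d1 = fls_subdegree f" "d2 = fls_subdegree g" using sf sg by auto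
    thus ?thesis using fls_times_base[of f g] by simp
  qed
qed

lemma fls_mult_X_if_nth:
  fixes f :: "'a::field fls"
  shows "(f * (if c then fls_X else 1)) $$ E = f $$ (E - (if c then 1 else 0))"
  by (cases c) (simp_all add: fls_X_times_conv_shift)

lemma sum_prod_delta:
  assumes "finite B" "finite J" "a \<in> J"
  shows "(\<Sum>p\<in>B \<times> J. if snd p = a then f (fst p) else 0) = (\<Sum>u\<in>B. f u :: 'k::comm_monoid_add)"
proof -
  have "(\<Sum>p\<in>B \<times> J. if snd p = a then f (fst p) else 0) = (\<Sum>u\<in>B. \<Sum>j\<in>J. if j = a then f u else 0)"
    by (simp add: sum.cartesian_product split_def)
  also have "\<dots> = (\<Sum>u\<in>B. f u)" using assms by (simp add: sum.delta)
  finally show ?thesis .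
qed

lemma leading_data:
  fixes x :: "'b \<times> nat \<Rightarrow> 'a::field fls"
  assumes n: "0 < n" and fin: "finite B"
    and x: "x \<in> sc_carrier (B \<times> {0..<n})" "x \<noteq> (\<lambda>_. 0)"
  obtains N :: int where
    "\<And>u j e. u \<in> B \<Longrightarrow> j < n \<Longrightarrow> int n * e + int j < N \<Longrightarrow> x (u, j) $$ e = 0"
    "\<And>u j e. u \<in> B \<Longrightarrow> j < n \<Longrightarrow> j \<noteq> nat (N mod int n) \<Longrightarrow> int n * e + int j < N + 1 \<Longrightarrow> x (u, j) $$ e = 0"
    "\<exists>u\<in>B. x (u, nat (N mod int n)) $$ (N div int n) \<noteq> 0"
proof -
  define S where "S = {p \<in> B \<times> {0..<n}. x p \<noteq> 0}"
  define val where "val = (\<lambda>p. int n * fls_subdegree (x p) + int (snd p))"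
  have finS: "finite S" using fin by (simp add: S_def)
  obtain p0 where p0: "x p0 \<noteq> 0" using x(2) by (metis ext)
  hence p0S: "p0 \<in> S" using x(1) unfolding S_def sc_carrier_def by (cases p0) auto
  define N where "N = Min (val ` S)"
  have NS: "N \<in> val ` S" unfolding N_def using finS p0S by (intro Min_in) auto
  have Nle: "N \<le> val p" if "p \<in> S" for p unfolding N_def using finS that by simp
  have A: "x (u, j) $$ e = 0" if "u \<in> B" "j < n" "int n * e + int j < N" for u j e
  proof (cases "x (u, j) = 0")
    case True thus ?thesis by simp
  next
    case False
    hence "(u, j) \<in> S" using that by (auto simp: S_def)
    hence "N \<le> int n * fls_subdegree (x (u, j)) + int j" using Nle by (auto simp: val_def)
    hence "int n * e < int n * fls_subdegree (x (u, j))" using that by linarith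
    hence "e < fls_subdegree (x (u, j))" using n by (simp add: mult_less_cancel_left)
    thus ?thesis by (rule fls_eq0_below_subdegree)
  qed
  obtain q where qS: "q \<in> S" and Nq: "N = val q" using NS by auto
  obtain u0 j0 where q: "q = (u0, j0)" by (cases q)
  have u0: "u0 \<in> B" "j0 < n" "x (u0, j0) \<noteq> 0" using qS q by (auto simp: S_def)
  have Nval: "N = int n * fls_subdegree (x (u0, j0)) + int j0" using Nq q by (simp add: val_def)
  have Nmod: "N mod int n = int j0" using Nval u0(2) n by simp
  have Ndiv: "N div int n = fls_subdegree (x (u0, j0))" using Nval u0(2) n by simp
  have B: "x (u, j) $$ e = 0" if "u \<in> B" "j < n" "j \<noteq> nat (N mod int n)" "int n * e + int j < N + 1" for u j e
  proof (cases "int n * e + int j < N")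
    case True thus ?thesis using A that by blast
  next
    case False
    hence eq: "int n * e + int j = N" using that(4) by linarith
    hence "N mod int n = int j" using that(2) n by (metis add.commute mod_mult_self2 mod_pos_pos_trivial of_nat_0_le_iff of_nat_less_iff mult.commute)
    thus ?thesis using that(3) by simp
  qed
  have C: "\<exists>u\<in>B. x (u, nat (N mod int n)) $$ (N div int n) \<noteq> 0"
    using u0 Nmod Ndiv by (intro bexI[of _ u0]) (simp_all add: nth_fls_subdegree_nonzero)
  show ?thesis using that A B C by blast
qed

lemma fls_nth_if0: "(if P then f else 0) $$ D = (if P then f $$ D else 0)"
  by simp

lemma domain_lift:
  fixes \<gamma> :: "'b \<Rightarrow> 'b \<Rightarrow> 'a::field" and \<chi> :: "'b \<Rightarrow> 'a"
  assumes n: "0 < n" and fin: "finite B"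
    and closed: "\<And>u v. u \<in> B \<Longrightarrow> v \<in> B \<Longrightarrow> op u v \<in> B"
    and chi: "\<And>v. v \<in> B \<Longrightarrow> \<chi> v \<noteq> 0"
    and dom: "sc_domain B (tw op \<gamma>)"
  shows "sc_domain (B \<times> {0..<n})
     (tw (\<lambda>p q. (op (fst p) (fst q), (snd p + snd q) mod n))
         (\<lambda>p q. fls_const (\<gamma> (fst p) (fst q) * \<chi> (fst q) ^ snd p) * (if n \<le> snd p + snd q then fls_X else 1)))"
  unfolding sc_domain_def
proof (intro ballI impI)
  let ?B' = "B \<times> {0..<n}"
  let ?op' = "\<lambda>p q. (op (fst p) (fst q), (snd p + snd q) mod n)"
  let ?g' = "\<lambda>p q. fls_const (\<gamma> (fst p) (fst q) * \<chi> (fst q) ^ snd p) * (if n \<le> snd p + snd q then fls_X else (1::'a fls))"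
  fix x y :: "'b \<times> nat \<Rightarrow> 'a fls"
  assume x: "x \<in> sc_carrier ?B'" and y: "y \<in> sc_carrier ?B'" and x0: "x \<noteq> (\<lambda>_. 0)" and y0: "y \<noteq> (\<lambda>_. 0)"
  obtain Nx where Nx1: "\<And>u j e. u \<in> B \<Longrightarrow> j < n \<Longrightarrow> int n * e + int j < Nx \<Longrightarrow> x (u, j) $$ e = 0"
    and Nx2: "\<And>u j e. u \<in> B \<Longrightarrow> j < n \<Longrightarrow> j \<noteq> nat (Nx mod int n) \<Longrightarrow> int n * e + int j < Nx + 1 \<Longrightarrow> x (u, j) $$ e = 0"
    and Nx3: "\<exists>u\<in>B. x (u, nat (Nx mod int n)) $$ (Nx div int n) \<noteq> 0"
    using leading_data[OF n fin x x0] by blast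
  obtain Ny where Ny1: "\<And>u j e. u \<in> B \<Longrightarrow> j < n \<Longrightarrow> int n * e + int j < Ny \<Longrightarrow> y (u, j) $$ e = 0"
    and Ny2: "\<And>u j e. u \<in> B \<Longrightarrow> j < n \<Longrightarrow> j \<noteq> nat (Ny mod int n) \<Longrightarrow> int n * e + int j < Ny + 1 \<Longrightarrow> y (u, j) $$ e = 0"
    and Ny3: "\<exists>u\<in>B. y (u, nat (Ny mod int n)) $$ (Ny div int n) \<noteq> 0"
    using leading_data[OF n fin y y0] by blast
  define jx where "jx = nat (Nx mod int n)"
  define dx where "dx = Nx div int n"
  define jy where "jy = nat (Ny mod int n)"
  define dy where "dy = Ny div int n"
  have jx: "jx < n" "Nx = int n * dx + int jx" unfolding jx_def dx_def using n
    by (simp_all add: nat_less_iff)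
  have jy: "jy < n" "Ny = int n * dy + int jy" unfolding jy_def dy_def using n
    by (simp_all add: nat_less_iff)
  define c0 where "c0 = (n \<le> jx + jy)"
  define jz where "jz = (jx + jy) mod n"
  define D where "D = dx + dy + (if c0 then 1 else 0)"
  have jz: "jz < n" using n by (simp add: jz_def)
  have carry: "int j + int b = int ((j + b) mod n) + int n * (if n \<le> j + b then 1 else 0)"
    if "j < n" "b < n" for j b
  proof (cases "n \<le> j + b")
    case True
    hence "(j + b) mod n = j + b - n" using that by (simp add: le_mod_geq)
    thus ?thesis using True by simp
  next
    case False thus ?thesis by simp
  qed
  have c0eq: "int jx + int jy = int jz + int n * (if c0 then 1 else 0)"
    using carry[OF jx(1) jy(1)] by (simp add: jz_def c0_def)
  define lx where "lx = (\<lambda>u. if u \<in> B then x (u, jx) $$ dx else 0)"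
  define ly where "ly = (\<lambda>v. if v \<in> B then y (v, jy) $$ dy * \<chi> v ^ jx else 0)"
  have lx: "lx \<in> sc_carrier B" "lx \<noteq> (\<lambda>_. 0)"
    using Nx3 unfolding lx_def jx_def dx_def sc_carrier_def by (auto simp: fun_eq_iff)
  have ly: "ly \<in> sc_carrier B" "ly \<noteq> (\<lambda>_. 0)"
    using Ny3 chi unfolding ly_def jy_def dy_def sc_carrier_def by (auto simp: fun_eq_iff)
  have "sc_mult B (tw op \<gamma>) lx ly \<noteq> (\<lambda>_. 0)" using dom lx ly unfolding sc_domain_def by blast
  then obtain w where w0: "sc_mult B (tw op \<gamma>) lx ly w \<noteq> 0" by (metis ext)
  hence wB: "w \<in> B" by (auto simp: sc_mult_tw split: if_splits)
  have xlow: "\<And>u e. u \<in> B \<Longrightarrow> e < dx \<Longrightarrow> x (u, jx) $$ e = 0"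
    using Nx1 jx by (metis add_less_cancel_right mult_less_cancel_left_pos of_nat_0_less_iff n)
  have ylow: "\<And>u e. u \<in> B \<Longrightarrow> e < dy \<Longrightarrow> y (u, jy) $$ e = 0"
    using Ny1 jy by (metis add_less_cancel_right mult_less_cancel_left_pos of_nat_0_less_iff n)
  have tm: "(if ?op' p q = (w, jz) then (x p * y q * ?g' p q) $$ D else 0) =
      (if snd p = jx then (if snd q = jy then (if op (fst p) (fst q) = w then lx (fst p) * ly (fst q) * \<gamma> (fst p) (fst q) else 0) else 0) else 0)"
    if p: "p \<in> ?B'" and q: "q \<in> ?B'" for p q
  proof -
    obtain u j where pu: "p = (u, j)" by (cases p)
    obtain v b where qv: "q = (v, b)" by (cases q)
    have uj: "u \<in> B" "j < n" using p pu by auto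
    have vb: "v \<in> B" "b < n" using q qv by auto
    show ?thesis
    proof (cases "op u v = w \<and> (j + b) mod n = jz")
      case False
      have "\<not> (j = jx \<and> b = jy \<and> op u v = w)" using False by (auto simp: jz_def)
      thus ?thesis using False pu qv by auto
    next
      case True
      define c where "c = (n \<le> j + b)"
      define \<kappa> where "\<kappa> = \<gamma> u v * \<chi> v ^ j"
      have cj: "int j + int b = int jz + int n * (if c then 1 else 0)"
        using carry[OF uj(2) vb(2)] True by (simp add: c_def)
      have "(x p * y q * ?g' p q) $$ D = \<kappa> * ((x (u, j) * y (v, b)) * (if c then fls_X else 1)) $$ D"
      proof -
        have "x p * y q * ?g' p q = fls_const \<kappa> * ((x (u, j) * y (v, b)) * (if c then fls_X else 1))"
          using pu qv by (simp add: \<kappa>_def c_def mult_ac)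
        thus ?thesis by (simp add: fls_mult_const_nth)
      qed
      also have "\<dots> = \<kappa> * (x (u, j) * y (v, b)) $$ (D - (if c then 1 else 0))"
        by (simp add: fls_mult_X_if_nth)
      finally have eq1: "(x p * y q * ?g' p q) $$ D = \<kappa> * (x (u, j) * y (v, b)) $$ (D - (if c then 1 else 0))" .
      have sumeq: "int n * (D - (if c then 1 else 0)) + int j + int b = Nx + Ny"
        using cj c0eq jx(2) jy(2) unfolding D_def by (simp add: algebra_simps)
      show ?thesis
      proof (cases "j = jx \<and> b = jy")
        case True2: True
        hence cc: "c = c0" unfolding c_def c0_def by simp
        have "D - (if c then 1 else 0) = dx + dy" using cc by (simp add: D_def)
        hence "(x (u, j) * y (v, b)) $$ (D - (if c then 1 else 0)) = x (u, jx) $$ dx * y (v, jy) $$ dy"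
          using True2 lead_mult[of dx "x (u, jx)" dy "y (v, jy)"] xlow[OF uj(1)] ylow[OF vb(1)] by simp
        thus ?thesis using eq1 True True2 pu qv uj vb
          by (simp add: lx_def ly_def \<kappa>_def mult_ac)
      next
        case False2: False
        have "(x (u, j) * y (v, b)) $$ (D - (if c then 1 else 0)) = 0"
        proof (cases "j = jx")
          case False
          show ?thesis
            by (rule lb_mult_zero[where n = "int n" and j = "int j" and A = "Nx + 1" and b = "int b" and A' = Ny])
               (use Nx2[OF uj(1) uj(2)] Ny1[OF vb(1) vb(2)] False sumeq in \<open>auto simp: jx_def\<close>)
        next
          case True
          hence bb: "b \<noteq> jy" using False2 by simp
          show ?thesis
            by (rule lb_mult_zero[where n = "int n" and j = "int j" and A = "Nx" and b = "int b" and A' = "Ny + 1"])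
               (use Nx1[OF uj(1) uj(2)] Ny2[OF vb(1) vb(2)] bb sumeq in \<open>auto simp: jy_def\<close>)
        qed
        thus ?thesis using eq1 True False2 pu qv by auto
      qed
    qed
  qed
  have wjz: "(w, jz) \<in> ?B'" using wB jz by simp
  have "(sc_mult ?B' (tw ?op' ?g') x y (w, jz)) $$ D =
      (\<Sum>p\<in>?B'. \<Sum>q\<in>?B'. if ?op' p q = (w, jz) then (x p * y q * ?g' p q) $$ D else 0)"
  proof -
    have "sc_mult ?B' (tw ?op' ?g') x y (w, jz) = (\<Sum>p\<in>?B'. \<Sum>q\<in>?B'. if ?op' p q = (w, jz) then x p * y q * ?g' p q else 0)"
      unfolding sc_mult_tw if_P[OF wjz] ..
    thus ?thesis by (simp only: fls_nth_sum fls_nth_if0)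
  qed
  also have "\<dots> = (\<Sum>p\<in>?B'. \<Sum>q\<in>?B'. (if snd p = jx then (if snd q = jy then (if op (fst p) (fst q) = w then lx (fst p) * ly (fst q) * \<gamma> (fst p) (fst q) else 0) else 0) else 0))"
    by (intro sum.cong refl tm) auto
  also have "\<dots> = (\<Sum>p\<in>?B'. if snd p = jx then (\<Sum>q\<in>?B'. (if snd q = jy then (if op (fst p) (fst q) = w then lx (fst p) * ly (fst q) * \<gamma> (fst p) (fst q) else 0) else 0)) else 0)"
    by (intro sum.cong refl) auto
  also have "\<dots> = (\<Sum>u\<in>B. \<Sum>q\<in>?B'. (if snd q = jy then (if op u (fst q) = w then lx u * ly (fst q) * \<gamma> u (fst q) else 0) else 0))"
    by (rule sum_prod_delta) (use fin jx in auto)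
  also have "\<dots> = (\<Sum>u\<in>B. \<Sum>v\<in>B. if op u v = w then lx u * ly v * \<gamma> u v else 0)"
    by (intro sum.cong refl sum_prod_delta) (use fin jy in auto)
  also have "\<dots> = sc_mult B (tw op \<gamma>) lx ly w" using wB by (simp add: sc_mult_tw)
  finally have "(sc_mult ?B' (tw ?op' ?g') x y (w, jz)) $$ D \<noteq> 0" using w0 by simp
  thus "sc_mult ?B' (tw ?op' ?g') x y \<noteq> (\<lambda>_. 0)" by auto
qed

lemma emb_KK_0[simp]: "emb_KK 0 = 0" by (simp add: emb_KK_def)
lemma emb_KK_1[simp]: "emb_KK 1 = 1" by (simp add: emb_KK_def)
lemma emb_KK_mult: "emb_KK (a * b) = emb_KK a * emb_KK b"
  by (simp add: emb_KK_def)
lemma emb_KK_power: "emb_KK (a ^ k) = emb_KK a ^ k"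
  by (simp add: emb_KK_def fls_const_power)
lemma emb_KK_inverse: "emb_KK (inverse a) = inverse (emb_KK a)"
  by (simp add: emb_KK_def fls_inverse_const)
lemma emb_KK_eq_iff[simp]: "emb_KK a = emb_KK b \<longleftrightarrow> a = b"
  by (auto simp: emb_KK_def dest: fls_const_inj)
lemma emb_KK_eq_0_iff[simp]: "emb_KK a = 0 \<longleftrightarrow> a = 0"
  using emb_KK_eq_iff[of a 0] by simp
lemma var_s_nz[simp]: "(var_s :: 'a::field fls fls) \<noteq> 0"
  by (simp add: var_s_def)
lemma var_t_nz[simp]: "(var_t :: 'a::field fls fls) \<noteq> 0"
  by (simp add: var_t_def)

lemma pow_mod_n: "z ^ n = (1::'a::monoid_mult) \<Longrightarrow> z ^ k = z ^ (k mod n)"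
  by (metis mult_div_mod_eq power_add power_mult power_one mult_1)

lemma carry_s:
  fixes s :: "'a::comm_monoid_mult" and n :: nat
  assumes "i < n" "a < n" "c < n"
  shows "(if n \<le> i + a then s else 1) * (if n \<le> (i + a) mod n + c then s else 1) =
         (if n \<le> a + c then s else 1) * (if n \<le> i + (a + c) mod n then s else 1)"
proof -
  have m: "x mod n = (if n \<le> x then x - n else x)" if "x < 2 * n" for x
    using that by (auto simp: le_mod_geq)
  have "(i + a) mod n = (if n \<le> i + a then i + a - n else i + a)" using m assms by simp
  moreover have "(a + c) mod n = (if n \<le> a + c then a + c - n else a + c)" using m assms by simp
  ultimately show ?thesis using assms by auto
qed

lemma exp_cong:
  assumes "0 < n"
  shows "(j * a + ((j + b) mod n) * c) mod n = (b * c + j * ((a + c) mod n)) mod (n::nat)"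
proof -
  have "(j * a + ((j + b) mod n) * c) mod n = (j * a + (j + b) * c) mod n"
    by (metis mod_add_right_eq mod_mult_left_eq)
  also have "j * a + (j + b) * c = b * c + j * (a + c)" by (simp add: algebra_simps)
  also have "(b * c + j * (a + c)) mod n = (b * c + j * ((a + c) mod n)) mod n"
    by (metis mod_add_right_eq mod_mult_right_eq)
  finally show ?thesis .
qed

locale MT =
  fixes G0 :: "('g, 'x) monoid_scheme" and n :: nat and \<zeta> :: "'a::field" and \<beta> :: "'g \<Rightarrow> 'g \<Rightarrow> 'a"
  assumes grp: "group G0" and finG: "finite (carrier G0)" and n2: "2 \<le> n"
    and zn: "\<zeta> ^ n = 1" and prim: "\<forall>m. 0 < m \<and> m < n \<longrightarrow> \<zeta> ^ m \<noteq> 1"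
    and coc: "cocycle2 G0 \<beta>"
    and cda: "sc_central_division_algebra (carrier G0) (twisted_sc G0 \<beta>)"
begin

definition BD :: "('g \<times> nat \<times> nat) set" where
  "BD = carrier G0 \<times> ({0..<n} \<times> {0..<n})"

definition opD :: "'g \<times> nat \<times> nat \<Rightarrow> 'g \<times> nat \<times> nat \<Rightarrow> 'g \<times> nat \<times> nat" where
  "opD = (\<lambda>(g, i, j) (h, a, b). (g \<otimes>\<^bsub>G0\<^esub> h, (i + a) mod n, (j + b) mod n))"

definition ZZ :: "'a fls fls" where "ZZ = inverse (emb_KK \<zeta>)"

definition \<gamma>D :: "'g \<times> nat \<times> nat \<Rightarrow> 'g \<times> nat \<times> nat \<Rightarrow> 'a fls fls" where
  "\<gamma>D = (\<lambda>(g, i, j) (h, a, b). emb_KK (\<beta> g h) * (ZZ ^ (j * a) * (if n \<le> i + a then var_s else 1)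
        * (if n \<le> j + b then var_t else 1)))"

lemma npos: "0 < n" using n2 by simp

lemma zeta_nz: "\<zeta> \<noteq> 0" using zn npos by (metis power_0_left zero_neq_one less_not_refl)

lemma ZZ_nz: "ZZ \<noteq> 0" using zeta_nz by (simp add: ZZ_def)

lemma ZZ_n: "ZZ ^ n = 1"
  by (simp add: ZZ_def power_inverse emb_KK_power[symmetric] zn)

lemma emb_KK_eq_1_iff: "emb_KK a = 1 \<longleftrightarrow> a = 1"
  using emb_KK_eq_iff[of a 1] by simp

lemma ZZ_prim: "0 < m \<Longrightarrow> m < n \<Longrightarrow> ZZ ^ m \<noteq> 1"
  using prim by (simp add: ZZ_def power_inverse emb_KK_power[symmetric] emb_KK_eq_1_iff)

lemma beta_nz: "g \<in> carrier G0 \<Longrightarrow> h \<in> carrier G0 \<Longrightarrow> \<beta> g h \<noteq> 0"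
  using coc by (simp add: cocycle2_def)

lemma beta_coc: "g \<in> carrier G0 \<Longrightarrow> h \<in> carrier G0 \<Longrightarrow> l \<in> carrier G0 \<Longrightarrow>
   \<beta> g h * \<beta> (g \<otimes>\<^bsub>G0\<^esub> h) l = \<beta> h l * \<beta> g (h \<otimes>\<^bsub>G0\<^esub> l)"
  using coc by (simp add: cocycle2_def)

lemma twisted_eq: "twisted_sc G0 \<beta> = tw (\<lambda>g h. g \<otimes>\<^bsub>G0\<^esub> h) \<beta>"
  by (simp add: twisted_sc_def tw_def fun_eq_iff)

lemma cD_eq: "sc_tensor (sc_base_change emb_KK (twisted_sc G0 \<beta>)) (symbol_sc n (emb_KK \<zeta>) var_s var_t) = tw opD \<gamma>D"
proof (intro ext)
  fix u v w :: "'g \<times> nat \<times> nat"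
  obtain g i j where u: "u = (g, i, j)" by (cases u) auto
  obtain h a b where v: "v = (h, a, b)" by (cases v) auto
  obtain m m1 m2 where w: "w = (m, m1, m2)" by (cases w) auto
  show "sc_tensor (sc_base_change emb_KK (twisted_sc G0 \<beta>)) (symbol_sc n (emb_KK \<zeta>) var_s var_t) u v w = tw opD \<gamma>D u v w"
    unfolding u v w
    by (simp add: sc_tensor_def sc_base_change_def twisted_sc_def symbol_sc_def tw_def opD_def \<gamma>D_def ZZ_def)
qed

lemma BD_finite: "finite BD" using finG by (simp add: BD_def)

lemma opD_closed: "u \<in> BD \<Longrightarrow> v \<in> BD \<Longrightarrow> opD u v \<in> BD"
  using npos by (auto simp: BD_def opD_def group.subgroup_self[OF grp] monoid.m_closed[OF group.is_monoid[OF grp]])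

lemma opD_assoc: "u \<in> BD \<Longrightarrow> v \<in> BD \<Longrightarrow> w \<in> BD \<Longrightarrow> opD (opD u v) w = opD u (opD v w)"
  by (clarsimp simp: BD_def opD_def monoid.m_assoc[OF group.is_monoid[OF grp]] mod_add_left_eq mod_add_right_eq add.assoc)

definition oneD where "oneD = (\<one>\<^bsub>G0\<^esub>, 0::nat, 0::nat)"

lemma oneD_in: "oneD \<in> BD" using npos by (simp add: oneD_def BD_def monoid.one_closed[OF group.is_monoid[OF grp]])

lemma oneD_l: "v \<in> BD \<Longrightarrow> opD oneD v = v"
  by (auto simp: BD_def opD_def oneD_def monoid.l_one[OF group.is_monoid[OF grp]])

lemma oneD_r: "v \<in> BD \<Longrightarrow> opD v oneD = v"
  by (auto simp: BD_def opD_def oneD_def monoid.r_one[OF group.is_monoid[OF grp]])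

lemma mod2: "x < 2 * n \<Longrightarrow> x mod n = (if n \<le> x then x - n else x)"
  by (auto simp: le_mod_geq)

lemma mod_cancel_r: "a < n \<Longrightarrow> b < n \<Longrightarrow> c < n \<Longrightarrow> (a + c) mod n = (b + c) mod n \<Longrightarrow> a = b"
  using mod2[of "a + c"] mod2[of "b + c"] by (auto split: if_splits)

lemma mod_cancel_l: "a < n \<Longrightarrow> b < n \<Longrightarrow> c < n \<Longrightarrow> (c + a) mod n = (c + b) mod n \<Longrightarrow> a = b"
  using mod_cancel_r[of a b c] by (simp add: add.commute)

lemma gD_nz: "u \<in> BD \<Longrightarrow> v \<in> BD \<Longrightarrow> \<gamma>D u v \<noteq> 0"
  using ZZ_nz by (auto simp: BD_def \<gamma>D_def beta_nz split: if_splits)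

lemma gD_coc:
  assumes "u \<in> BD" "v \<in> BD" "w \<in> BD"
  shows "\<gamma>D u v * \<gamma>D (opD u v) w = \<gamma>D v w * \<gamma>D u (opD v w)"
proof -
  obtain g i j where u: "u = (g, i, j)" by (cases u) auto
  obtain h a b where v: "v = (h, a, b)" by (cases v) auto
  obtain l c d where w: "w = (l, c, d)" by (cases w) auto
  have g: "g \<in> carrier G0" "i < n" "j < n" using assms(1) u by (auto simp: BD_def)
  have h: "h \<in> carrier G0" "a < n" "b < n" using assms(2) v by (auto simp: BD_def)
  have l: "l \<in> carrier G0" "c < n" "d < n" using assms(3) w by (auto simp: BD_def)
  let ?S = "\<lambda>k. if n \<le> k then (var_s :: 'a fls fls) else 1"
  let ?T = "\<lambda>k. if n \<le> k then (var_t :: 'a fls fls) else 1"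
  have Eb: "emb_KK (\<beta> g h) * emb_KK (\<beta> (g \<otimes>\<^bsub>G0\<^esub> h) l) = emb_KK (\<beta> h l) * emb_KK (\<beta> g (h \<otimes>\<^bsub>G0\<^esub> l))"
    using beta_coc[OF g(1) h(1) l(1)] by (simp add: emb_KK_mult[symmetric])
  have Ez: "ZZ ^ (j * a) * ZZ ^ (((j + b) mod n) * c) = ZZ ^ (b * c) * ZZ ^ (j * ((a + c) mod n))"
    unfolding power_add[symmetric]
    by (subst (1 2) pow_mod_n[OF ZZ_n]) (simp add: exp_cong[OF npos])
  have Es: "?S (i + a) * ?S ((i + a) mod n + c) = ?S (a + c) * ?S (i + (a + c) mod n)"
    by (rule carry_s) (use g h l in auto)
  have Et: "?T (j + b) * ?T ((j + b) mod n + d) = ?T (b + d) * ?T (j + (b + d) mod n)"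
    by (rule carry_s) (use g h l in auto)
  have L: "\<gamma>D u v * \<gamma>D (opD u v) w =
     (emb_KK (\<beta> g h) * emb_KK (\<beta> (g \<otimes>\<^bsub>G0\<^esub> h) l)) * (ZZ ^ (j * a) * ZZ ^ (((j + b) mod n) * c))
     * (?S (i + a) * ?S ((i + a) mod n + c)) * (?T (j + b) * ?T ((j + b) mod n + d))"
    unfolding u v w by (simp add: \<gamma>D_def opD_def mult_ac)
  have R: "\<gamma>D v w * \<gamma>D u (opD v w) =
     (emb_KK (\<beta> h l) * emb_KK (\<beta> g (h \<otimes>\<^bsub>G0\<^esub> l))) * (ZZ ^ (b * c) * ZZ ^ (j * ((a + c) mod n)))
     * (?S (a + c) * ?S (i + (a + c) mod n)) * (?T (b + d) * ?T (j + (b + d) mod n))"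
    unfolding u v w by (simp add: \<gamma>D_def opD_def mult_ac)
  show ?thesis unfolding L R Eb Ez Es Et ..
qed

lemma D_assoc: "sc_mult BD (tw opD \<gamma>D) (sc_mult BD (tw opD \<gamma>D) x y) z = sc_mult BD (tw opD \<gamma>D) x (sc_mult BD (tw opD \<gamma>D) y z)"
  by (rule tw_assoc[OF BD_finite opD_closed opD_assoc gD_coc])

lemma opD_lcanc: "u \<in> BD \<Longrightarrow> v \<in> BD \<Longrightarrow> w \<in> BD \<Longrightarrow> opD u w = opD v w \<Longrightarrow> u = v"
  by (auto simp: BD_def opD_def group.right_cancel[OF grp] dest: mod_cancel_r)

lemma opD_rcanc: "u \<in> BD \<Longrightarrow> v \<in> BD \<Longrightarrow> w \<in> BD \<Longrightarrow> opD w u = opD w v \<Longrightarrow> u = v"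
  using monoid.Units_l_cancel[OF group.is_monoid[OF grp]] group.Units_eq[OF grp]
  by (auto simp: BD_def opD_def dest: mod_cancel_l)

definition eD where "eD = (\<lambda>i. if i = oneD then inverse (\<gamma>D oneD oneD) else 0)"

lemma D_unit: "sc_unit BD (tw opD \<gamma>D) eD"
  unfolding eD_def
  by (rule tw_unit[OF BD_finite opD_closed oneD_in oneD_l oneD_r opD_lcanc opD_rcanc gD_nz gD_coc])

lemma eD_nz: "eD \<noteq> (\<lambda>_. 0)"
proof
  assume "eD = (\<lambda>_. 0)"
  hence "eD oneD = 0" by simp
  thus False using gD_nz[OF oneD_in oneD_in] by (simp add: eD_def)
qed

end

lemma division_domain:
  assumes "sc_division_algebra B c"
  shows "sc_domain B c"
  unfolding sc_domain_def
proof (intro ballI impI notI)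
  fix x y assume x: "x \<in> sc_carrier B" and y: "y \<in> sc_carrier B" and x0: "x \<noteq> (\<lambda>_. 0)"
    and y0: "y \<noteq> (\<lambda>_. 0)" and xy: "sc_mult B c x y = (\<lambda>_. 0)"
  obtain e where e: "sc_unit B c e" and inv: "\<forall>x\<in>sc_carrier B. x \<noteq> (\<lambda>_. 0) \<longrightarrow>
           (\<exists>y\<in>sc_carrier B. sc_mult B c x y = e \<and> sc_mult B c y x = e)"
    and assoc: "\<forall>x\<in>sc_carrier B. \<forall>y\<in>sc_carrier B. \<forall>z\<in>sc_carrier B.
        sc_mult B c (sc_mult B c x y) z = sc_mult B c x (sc_mult B c y z)"
    using assms unfolding sc_division_algebra_def by blast
  obtain x' where x': "x' \<in> sc_carrier B" "sc_mult B c x' x = e" using inv x x0 by blast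
  have "y = sc_mult B c e y" using e y by (simp add: sc_unit_def)
  also have "\<dots> = sc_mult B c x' (sc_mult B c x y)" using assoc x x' y by metis
  also have "\<dots> = (\<lambda>_. 0)" using xy by (simp add: sc_mult_zero_right)
  finally show False using y0 by simp
qed

lemma sc_mult_reindex:
  assumes bij: "bij_betw \<pi> B' B"
    and c: "\<And>u v w. u \<in> B' \<Longrightarrow> v \<in> B' \<Longrightarrow> w \<in> B' \<Longrightarrow> c' u v w = c (\<pi> u) (\<pi> v) (\<pi> w)"
    and m: "m \<in> B'"
  shows "sc_mult B c (\<lambda>i. x (inv_into B' \<pi> i)) (\<lambda>i. y (inv_into B' \<pi> i)) (\<pi> m) = sc_mult B' c' x y m"
proof -
  have pm: "\<pi> m \<in> B" using bij m by (auto simp: bij_betw_def)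
  have inv: "inv_into B' \<pi> (\<pi> u) = u" if "u \<in> B'" for u
    using bij that by (simp add: bij_betw_def)
  have "sc_mult B c (\<lambda>i. x (inv_into B' \<pi> i)) (\<lambda>i. y (inv_into B' \<pi> i)) (\<pi> m) =
      (\<Sum>i\<in>B. \<Sum>j\<in>B. x (inv_into B' \<pi> i) * y (inv_into B' \<pi> j) * c i j (\<pi> m))"
    using pm by (simp add: sc_mult_def)
  also have "\<dots> = (\<Sum>u\<in>B'. \<Sum>v\<in>B'. x (inv_into B' \<pi> (\<pi> u)) * y (inv_into B' \<pi> (\<pi> v)) * c (\<pi> u) (\<pi> v) (\<pi> m))"
    by (subst sum.reindex_bij_betw[OF bij, symmetric], rule sum.cong[OF refl],
        subst sum.reindex_bij_betw[OF bij, symmetric], rule refl)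
  also have "\<dots> = (\<Sum>u\<in>B'. \<Sum>v\<in>B'. x u * y v * c' u v m)"
    by (intro sum.cong refl) (simp add: inv c m)
  also have "\<dots> = sc_mult B' c' x y m" using m by (simp add: sc_mult_def)
  finally show ?thesis .
qed

lemma domain_reindex:
  fixes c :: "'b \<Rightarrow> 'b \<Rightarrow> 'b \<Rightarrow> 'k::comm_ring_1" and c' :: "'a \<Rightarrow> 'a \<Rightarrow> 'a \<Rightarrow> 'k"
  assumes bij: "bij_betw \<pi> B' B"
    and c: "\<And>u v w. u \<in> B' \<Longrightarrow> v \<in> B' \<Longrightarrow> w \<in> B' \<Longrightarrow> c' u v w = c (\<pi> u) (\<pi> v) (\<pi> w)"
    and dom: "sc_domain B c"
  shows "sc_domain B' c'"
  unfolding sc_domain_def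
proof (intro ballI impI)
  fix x y :: "'a \<Rightarrow> 'k" assume x: "x \<in> sc_carrier B'" and y: "y \<in> sc_carrier B'" and x0: "x \<noteq> (\<lambda>_. 0)"
    and y0: "y \<noteq> (\<lambda>_. 0)"
  define x' where "x' = (\<lambda>i. if i \<in> B then x (inv_into B' \<pi> i) else 0)"
  define y' where "y' = (\<lambda>i. if i \<in> B then y (inv_into B' \<pi> i) else 0)"
  have inv: "inv_into B' \<pi> (\<pi> u) = u" if "u \<in> B'" for u
    using bij that by (simp add: bij_betw_def)
  have piB: "\<pi> u \<in> B" if "u \<in> B'" for u using bij that by (auto simp: bij_betw_def)
  have nz: "f' \<noteq> (\<lambda>_. 0)" if f1: "f \<in> sc_carrier B'" and f2: "f \<noteq> (\<lambda>_. 0)" and f3: "f' = (\<lambda>i. if i \<in> B then f (inv_into B' \<pi> i) else 0)" for f f'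
  proof -
    obtain u where u: "f u \<noteq> 0" using f2 by (metis ext)
    hence uB: "u \<in> B'" using f1 by (auto simp: sc_carrier_def)
    have "f' (\<pi> u) = f u" using f3 uB inv piB by simp
    thus ?thesis using u by auto
  qed
  have "sc_mult B c x' y' \<noteq> (\<lambda>_. 0)"
    using dom nz[OF x x0 x'_def] nz[OF y y0 y'_def] unfolding sc_domain_def x'_def y'_def sc_carrier_def
    by auto
  then obtain i where i: "sc_mult B c x' y' i \<noteq> 0" by (metis ext)
  hence iB: "i \<in> B" by (auto simp: sc_mult_def split: if_splits)
  then obtain m where m: "m \<in> B'" "i = \<pi> m" using bij by (auto simp: bij_betw_def)
  have eqm: "sc_mult B c x' y' (\<pi> m) = sc_mult B c (\<lambda>i. x (inv_into B' \<pi> i)) (\<lambda>i. y (inv_into B' \<pi> i)) (\<pi> m)"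
    by (simp add: sc_mult_def x'_def y'_def)
  have "sc_mult B' c' x y m \<noteq> 0"
    using i m eqm sc_mult_reindex[where \<pi>=\<pi> and B'=B' and B=B and c=c and c'=c' and x=x and y=y, OF bij c m(1)] by simp
  thus "sc_mult B' c' x y \<noteq> (\<lambda>_. 0)" by auto
qed

context MT begin

lemma A_domain: "sc_domain (carrier G0) (tw (\<lambda>g h. g \<otimes>\<^bsub>G0\<^esub> h) \<beta>)"
  using division_domain cda unfolding sc_central_division_algebra_def twisted_eq by blast

lemma m_closed': "g \<in> carrier G0 \<Longrightarrow> h \<in> carrier G0 \<Longrightarrow> g \<otimes>\<^bsub>G0\<^esub> h \<in> carrier G0"
  by (rule monoid.m_closed[OF group.is_monoid[OF grp]])

lemmas dom1 = domain_lift[where \<chi> = "\<lambda>_. 1", OF npos finG m_closed' _ A_domain, simplified]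

lemma closed1: "u \<in> carrier G0 \<times> {0..<n} \<Longrightarrow> v \<in> carrier G0 \<times> {0..<n} \<Longrightarrow>
   (fst u \<otimes>\<^bsub>G0\<^esub> fst v, (snd u + snd v) mod n) \<in> carrier G0 \<times> {0..<n}"
  using npos by (auto intro: m_closed')

lemma chi2: "(fls_const (inverse \<zeta>) ^ snd q :: 'a fls) \<noteq> 0"
  using zeta_nz by simp

lemmas dom2 = domain_lift[where \<chi> = "\<lambda>q. fls_const (inverse \<zeta>) ^ snd q", OF npos _ closed1 chi2 dom1, simplified]

lemma fc_mult: "fls_const (x * y :: 'c::field) = fls_const x * fls_const y" by (rule fls_const_mult_const[symmetric])
lemma fc_pow: "fls_const (x ^ k) = fls_const x ^ k" by (simp add: fls_const_power)

lemma gD_alt: "\<gamma>D (g, i, j) (h, a, b) =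
   fls_const (fls_const (\<beta> g h) * (if n \<le> i + a then fls_X else 1) * (fls_const (inverse \<zeta>) ^ a) ^ j) *
   (if n \<le> j + b then fls_X else 1)"
proof -
  have Z: "ZZ = fls_const (fls_const (inverse \<zeta>))"
    by (simp add: ZZ_def emb_KK_def fls_inverse_const)
  have S: "fls_const (if n \<le> i + a then fls_X else 1) = (if n \<le> i + a then var_s else (1 :: 'a fls fls))"
    by (simp add: var_s_def)
  have P: "(c ^ j) ^ a = (c ^ a) ^ j" for c :: "'a fls fls"
    by (simp add: power_mult[symmetric] mult.commute)
  show ?thesis
    unfolding fc_mult fc_pow S \<gamma>D_def Z
    by (simp add: emb_KK_def var_t_def power_mult P mult_ac)
qed

lemma BD_bij: "bij_betw (\<lambda>(g, i, j). ((g, i), j)) BD ((carrier G0 \<times> {0..<n}) \<times> {0..<n})"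
  by (rule bij_betwI[where g = "\<lambda>((g, i), j). (g, i, j)"]) (auto simp: BD_def)

lemma D_domain: "sc_domain BD (tw opD \<gamma>D)"
proof (rule domain_reindex[OF BD_bij _ dom2])
  show "finite (carrier G0 \<times> {0..<n})" using finG by simp
next
  fix u v w assume "u \<in> BD" "v \<in> BD" "w \<in> BD"
  obtain g i j where u: "u = (g, i, j)" by (cases u) auto
  obtain h a b where v: "v = (h, a, b)" by (cases v) auto
  obtain m m1 m2 where w: "w = (m, m1, m2)" by (cases w) auto
  show "tw opD \<gamma>D u v w = tw (\<lambda>p q. ((fst (fst p) \<otimes>\<^bsub>G0\<^esub> fst (fst q),
                  (snd (fst p) + snd (fst q)) mod n),
                 (snd p + snd q) mod n))
       (\<lambda>p q. fls_const
               (fls_const (\<beta> (fst (fst p)) (fst (fst q))) *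
                (if n \<le> snd (fst p) + snd (fst q) then fls_X else 1) *
                (fls_const (inverse \<zeta>) ^ snd (fst q)) ^ snd p) *
              (if n \<le> snd p + snd q then fls_X else 1)) ((\<lambda>(g, i, j). ((g, i), j)) u) ((\<lambda>(g, i, j). ((g, i), j)) v) ((\<lambda>(g, i, j). ((g, i), j)) w)"
    unfolding u v w by (simp add: tw_def opD_def gD_alt)
qed

lemma D_division: "x \<in> sc_carrier BD \<Longrightarrow> x \<noteq> (\<lambda>_. 0) \<Longrightarrow>
   \<exists>y\<in>sc_carrier BD. sc_mult BD (tw opD \<gamma>D) x y = eD \<and> sc_mult BD (tw opD \<gamma>D) y x = eD"
  by (rule domain_inverse[OF BD_finite _ D_unit D_domain]) (simp_all add: D_assoc)

end

lemma mult_delta_right: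
  assumes fin: "finite B" and a: "a \<in> B" and w: "w \<in> B" and opc: "op w a \<in> B"
    and canc: "\<And>u. u \<in> B \<Longrightarrow> op u a = op w a \<Longrightarrow> u = w"
  shows "sc_mult B (tw op \<gamma>) z (\<lambda>i. if i = a then 1 else 0) (op w a) = z w * \<gamma> w a"
proof -
  have "sc_mult B (tw op \<gamma>) z (\<lambda>i. if i = a then 1 else 0) (op w a) =
     (\<Sum>u\<in>B. \<Sum>v\<in>B. if op u v = op w a then z u * (if v = a then 1 else 0) * \<gamma> u v else 0)"
    using opc by (simp add: sc_mult_tw)
  also have "\<dots> = (\<Sum>u\<in>B. \<Sum>v\<in>B. if a = v then (if w = u then z u * \<gamma> u v else 0) else 0)"
    by (intro sum.cong refl) (auto dest: canc)
  also have "\<dots> = (\<Sum>u\<in>B. if w = u then z u * \<gamma> u a else 0)"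
    using a fin by (simp add: sum.delta')
  also have "\<dots> = z w * \<gamma> w a" using w fin by (simp add: sum.delta')
  finally show ?thesis .
qed

lemma mult_delta_left:
  assumes fin: "finite B" and a: "a \<in> B" and w: "w \<in> B" and opc: "op a w \<in> B"
    and canc: "\<And>u. u \<in> B \<Longrightarrow> op a u = op a w \<Longrightarrow> u = w"
  shows "sc_mult B (tw op \<gamma>) (\<lambda>i. if i = a then 1 else 0) z (op a w) = \<gamma> a w * z w"
proof -
  have "sc_mult B (tw op \<gamma>) (\<lambda>i. if i = a then 1 else 0) z (op a w) =
     (\<Sum>u\<in>B. \<Sum>v\<in>B. if op u v = op a w then (if u = a then 1 else 0) * z v * \<gamma> u v else 0)"
    using opc by (simp add: sc_mult_tw)
  also have "\<dots> = (\<Sum>u\<in>B. if a = u then (\<Sum>v\<in>B. if w = v then \<gamma> u v * z v else 0) else 0)"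
    apply (intro sum.cong refl)
    subgoal for u by (cases "u = a") (auto dest: canc intro!: sum.cong simp: mult.commute cong: if_cong)
    done
  also have "\<dots> = (\<Sum>v\<in>B. if w = v then \<gamma> a v * z v else 0)"
    using a fin by (simp add: sum.delta')
  also have "\<dots> = \<gamma> a w * z w" using w fin by (simp add: sum.delta')
  finally show ?thesis .
qed

context MT begin

abbreviation "MD \<equiv> sc_mult BD (tw opD \<gamma>D)"

definition XD where "XD = (\<one>\<^bsub>G0\<^esub>, 1::nat, 0::nat)"
definition YD where "YD = (\<one>\<^bsub>G0\<^esub>, 0::nat, 1::nat)"

lemma one_G: "\<one>\<^bsub>G0\<^esub> \<in> carrier G0" by (rule monoid.one_closed[OF group.is_monoid[OF grp]])
lemma l_one_G: "g \<in> carrier G0 \<Longrightarrow> \<one>\<^bsub>G0\<^esub> \<otimes>\<^bsub>G0\<^esub> g = g" by (rule monoid.l_one[OF group.is_monoid[OF grp]])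
lemma r_one_G: "g \<in> carrier G0 \<Longrightarrow> g \<otimes>\<^bsub>G0\<^esub> \<one>\<^bsub>G0\<^esub> = g" by (rule monoid.r_one[OF group.is_monoid[OF grp]])

lemma XD_in: "XD \<in> BD" and YD_in: "YD \<in> BD"
  using n2 one_G by (auto simp: XD_def YD_def BD_def)

lemma beta_one: "g \<in> carrier G0 \<Longrightarrow> \<beta> g \<one>\<^bsub>G0\<^esub> = \<beta> \<one>\<^bsub>G0\<^esub> g"
proof -
  assume g: "g \<in> carrier G0"
  have a: "\<beta> g \<one>\<^bsub>G0\<^esub> = \<beta> \<one>\<^bsub>G0\<^esub> \<one>\<^bsub>G0\<^esub>"
    using beta_coc[OF g one_G one_G] beta_nz[OF g one_G] by (simp add: r_one_G l_one_G one_G g)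
  have b: "\<beta> \<one>\<^bsub>G0\<^esub> g = \<beta> \<one>\<^bsub>G0\<^esub> \<one>\<^bsub>G0\<^esub>"
    using beta_coc[OF one_G one_G g] beta_nz[OF one_G g] by (simp add: r_one_G l_one_G one_G g)
  show ?thesis using a b by simp
qed

lemma center_support:
  assumes z: "z \<in> sc_center BD (tw opD \<gamma>D)" and w: "(g, i, j) \<in> BD" and nz: "z (g, i, j) \<noteq> 0"
  shows "i = 0 \<and> j = 0"
proof -
  have zc: "z \<in> sc_carrier BD" and comm: "\<And>x. x \<in> sc_carrier BD \<Longrightarrow> MD z x = MD x z"
    using z by (auto simp: sc_center_def)
  have g: "g \<in> carrier G0" "i < n" "j < n" using w by (auto simp: BD_def)
  have gen: "\<gamma>D (g, i, j) a = \<gamma>D a (g, i, j)" if a: "a \<in> BD" and com: "opD (g, i, j) a = opD a (g, i, j)"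
     and canc: "\<And>u. u \<in> BD \<Longrightarrow> opD u a = opD (g, i, j) a \<Longrightarrow> u = (g, i, j)"
     and canc2: "\<And>u. u \<in> BD \<Longrightarrow> opD a u = opD a (g, i, j) \<Longrightarrow> u = (g, i, j)" for a
  proof -
    have dc: "(\<lambda>i. if i = a then 1 else 0) \<in> sc_carrier BD" using a by (auto simp: sc_carrier_def)
    have "z (g, i, j) * \<gamma>D (g, i, j) a = MD z (\<lambda>i. if i = a then 1 else 0) (opD (g, i, j) a)"
      by (rule mult_delta_right[where op=opD and \<gamma>=\<gamma>D and z=z, symmetric, OF BD_finite a w opD_closed[OF w a] canc])
    also have "\<dots> = MD (\<lambda>i. if i = a then 1 else 0) z (opD a (g, i, j))" using comm[OF dc] com by simp
    also have "\<dots> = \<gamma>D a (g, i, j) * z (g, i, j)"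
      by (rule mult_delta_left[where op=opD and \<gamma>=\<gamma>D and z=z, OF BD_finite a w opD_closed[OF a w] canc2])
    finally show ?thesis using nz by (simp add: mult.commute)
  qed
  have nn: "1 < n" using n2 by simp
  have cX: "opD (g, i, j) XD = opD XD (g, i, j)" using g by (simp add: opD_def XD_def l_one_G r_one_G add.commute)
  have cY: "opD (g, i, j) YD = opD YD (g, i, j)" using g by (simp add: opD_def YD_def l_one_G r_one_G add.commute)
  have eX: "\<gamma>D (g, i, j) XD = \<gamma>D XD (g, i, j)"
    by (rule gen[OF XD_in cX]) (metis opD_lcanc XD_in w, metis opD_rcanc XD_in w)
  have eY: "\<gamma>D (g, i, j) YD = \<gamma>D YD (g, i, j)"
    by (rule gen[OF YD_in cY]) (metis opD_lcanc YD_in w, metis opD_rcanc YD_in w)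
  have bnz: "emb_KK (\<beta> g \<one>\<^bsub>G0\<^esub>) \<noteq> 0" using beta_nz[OF g(1) one_G] by simp
  have "ZZ ^ j = 1"
    using eX bnz ZZ_nz by (simp add: \<gamma>D_def XD_def beta_one[OF g(1)] add.commute split: if_splits)
  hence j0: "j = 0" using ZZ_prim[of j] g(3) by (cases "j = 0") auto
  have "ZZ ^ i = 1"
    using eY bnz ZZ_nz by (simp add: \<gamma>D_def YD_def beta_one[OF g(1)] add.commute split: if_splits)
  hence i0: "i = 0" using ZZ_prim[of i] g(2) by (cases "i = 0") auto
  show ?thesis using i0 j0 by simp
qed

end

lemma sc_mult_fsc_left: "sc_mult B c (fsc a x) y = fsc a (sc_mult B c x y)"
  by (auto simp: sc_mult_def fun_eq_iff fsc_def sum_distrib_left algebra_simps)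

lemma nth_emb: "((f * emb_KK c) $$ b) $$ a = (f $$ b) $$ a * c"
  by (simp add: emb_KK_def fls_mult_const_nth)

context MT begin

definition hat :: "('g \<Rightarrow> 'a) \<Rightarrow> 'g \<times> nat \<times> nat \<Rightarrow> 'a fls fls" where
  "hat x = (\<lambda>(g, i, j). if i = 0 \<and> j = 0 \<and> g \<in> carrier G0 then emb_KK (x g) else 0)"

definition coef :: "('g \<times> nat \<times> nat \<Rightarrow> 'a fls fls) \<Rightarrow> int \<Rightarrow> int \<Rightarrow> 'g \<Rightarrow> 'a" where
  "coef z b a = (\<lambda>g. if g \<in> carrier G0 then (z (g, 0, 0) $$ b) $$ a else 0)"

lemma hat_in: "hat x \<in> sc_carrier BD"
  using npos by (auto simp: hat_def sc_carrier_def BD_def)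

lemma coef_in: "coef z b a \<in> sc_carrier (carrier G0)"
  by (auto simp: coef_def sc_carrier_def)

lemma sum_BD00:
  assumes "\<And>g i j. (g, i, j) \<in> BD \<Longrightarrow> \<not> (i = 0 \<and> j = 0) \<Longrightarrow> F (g, i, j) = 0"
  shows "(\<Sum>u\<in>BD. F u) = (\<Sum>g\<in>carrier G0. F (g, 0, 0))"
proof -
  have "(\<Sum>u\<in>BD. F u) = (\<Sum>g\<in>carrier G0. \<Sum>p\<in>{0..<n} \<times> {0..<n}. F (g, p))"
    unfolding BD_def by (simp add: sum.cartesian_product split_def)
  also have "\<dots> = (\<Sum>g\<in>carrier G0. \<Sum>p\<in>{0..<n} \<times> {0..<n}. if (0, 0) = p then F (g, 0, 0) else 0)"
    apply (intro sum.cong refl)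
    subgoal for g p using assms[of g "fst p" "snd p"] by (cases p) (auto simp: BD_def)
    done
  also have "\<dots> = (\<Sum>g\<in>carrier G0. F (g, 0, 0))"
    using npos by (simp add: sum.delta')
  finally show ?thesis .
qed

lemma gD00: "\<gamma>D (g, 0, 0) (h, 0, 0) = emb_KK (\<beta> g h)"
  using npos by (simp add: \<gamma>D_def)

lemma opD00: "opD (g, 0, 0) (h, 0, 0) = (g \<otimes>\<^bsub>G0\<^esub> h, 0, 0)"
  by (simp add: opD_def)

definition supp00 where "supp00 z \<longleftrightarrow> (\<forall>g i j. z (g, i, j) \<noteq> 0 \<longrightarrow> i = 0 \<and> j = 0)"

lemma prod_left:
  assumes z: "supp00 z" and m: "m \<in> carrier G0"
  shows "MD z (hat x) (m, 0, 0) = (\<Sum>g\<in>carrier G0. \<Sum>h\<in>carrier G0.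
           if g \<otimes>\<^bsub>G0\<^esub> h = m then z (g, 0, 0) * emb_KK (x h * \<beta> g h) else 0)"
proof -
  have mB: "(m, 0, 0) \<in> BD" using m npos by (simp add: BD_def)
  have "MD z (hat x) (m, 0, 0) = (\<Sum>u\<in>BD. \<Sum>v\<in>BD. if opD u v = (m, 0, 0) then z u * hat x v * \<gamma>D u v else 0)"
    using mB by (simp add: sc_mult_tw)
  also have "\<dots> = (\<Sum>g\<in>carrier G0. \<Sum>v\<in>BD. if opD (g, 0, 0) v = (m, 0, 0) then z (g, 0, 0) * hat x v * \<gamma>D (g, 0, 0) v else 0)"
    apply (rule sum_BD00)
    subgoal for g i j
      using z unfolding supp00_def by (subgoal_tac "z (g, i, j) = 0") (auto intro!: sum.neutral)
    done
  also have "\<dots> = (\<Sum>g\<in>carrier G0. \<Sum>h\<in>carrier G0. if opD (g, 0, 0) (h, 0, 0) = (m, 0, 0) then z (g, 0, 0) * hat x (h, 0, 0) * \<gamma>D (g, 0, 0) (h, 0, 0) else 0)"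
    by (intro sum.cong refl sum_BD00) (auto simp: hat_def)
  also have "\<dots> = (\<Sum>g\<in>carrier G0. \<Sum>h\<in>carrier G0.
           if g \<otimes>\<^bsub>G0\<^esub> h = m then z (g, 0, 0) * emb_KK (x h * \<beta> g h) else 0)"
    by (intro sum.cong refl) (simp add: opD00 gD00 hat_def emb_KK_mult mult.assoc)
  finally show ?thesis .
qed

lemma prod_right:
  assumes z: "supp00 z" and m: "m \<in> carrier G0"
  shows "MD (hat x) z (m, 0, 0) = (\<Sum>g\<in>carrier G0. \<Sum>h\<in>carrier G0.
           if g \<otimes>\<^bsub>G0\<^esub> h = m then z (h, 0, 0) * emb_KK (x g * \<beta> g h) else 0)"
proof -
  have mB: "(m, 0, 0) \<in> BD" using m npos by (simp add: BD_def)
  have "MD (hat x) z (m, 0, 0) = (\<Sum>u\<in>BD. \<Sum>v\<in>BD. if opD u v = (m, 0, 0) then hat x u * z v * \<gamma>D u v else 0)"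
    using mB by (simp add: sc_mult_tw)
  also have "\<dots> = (\<Sum>g\<in>carrier G0. \<Sum>v\<in>BD. if opD (g, 0, 0) v = (m, 0, 0) then hat x (g, 0, 0) * z v * \<gamma>D (g, 0, 0) v else 0)"
    by (rule sum_BD00) (auto simp: hat_def intro!: sum.neutral)
  also have "\<dots> = (\<Sum>g\<in>carrier G0. \<Sum>h\<in>carrier G0. if opD (g, 0, 0) (h, 0, 0) = (m, 0, 0) then hat x (g, 0, 0) * z (h, 0, 0) * \<gamma>D (g, 0, 0) (h, 0, 0) else 0)"
    apply (intro sum.cong refl sum_BD00)
    subgoal for g h i j
      using z unfolding supp00_def by (subgoal_tac "z (h, i, j) = 0") auto
    done
  also have "\<dots> = (\<Sum>g\<in>carrier G0. \<Sum>h\<in>carrier G0.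
           if g \<otimes>\<^bsub>G0\<^esub> h = m then z (h, 0, 0) * emb_KK (x g * \<beta> g h) else 0)"
    by (intro sum.cong refl) (simp add: opD00 gD00 hat_def emb_KK_mult mult_ac)
  finally show ?thesis .
qed

lemma nth_sum2: "((\<Sum>g\<in>A. \<Sum>h\<in>B. if P g h then f g h * emb_KK (c g h) else 0) $$ b) $$ a =
   (\<Sum>g\<in>A. \<Sum>h\<in>B. if P g h then (f g h $$ b) $$ a * c g h else 0)"
proof -
  have t: "((if P g h then f g h * emb_KK (c g h) else 0) $$ b) $$ a = (if P g h then (f g h $$ b) $$ a * c g h else 0)" for g h
    by (simp add: nth_emb)
  show ?thesis by (simp only: fls_nth_sum t)
qed

lemma coef_left:
  assumes z: "supp00 z" and m: "m \<in> carrier G0"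
  shows "(MD z (hat x) (m, 0, 0) $$ b) $$ a = sc_mult (carrier G0) (tw (\<lambda>g h. g \<otimes>\<^bsub>G0\<^esub> h) \<beta>) (coef z b a) x m"
proof -
  have "(\<Sum>g\<in>carrier G0. \<Sum>h\<in>carrier G0. if g \<otimes>\<^bsub>G0\<^esub> h = m then (z (g, 0, 0) $$ b) $$ a * (x h * \<beta> g h) else 0)
     = (\<Sum>g\<in>carrier G0. \<Sum>h\<in>carrier G0. if g \<otimes>\<^bsub>G0\<^esub> h = m then coef z b a g * x h * \<beta> g h else 0)"
    by (intro sum.cong refl) (simp add: coef_def mult_ac)
  thus ?thesis unfolding prod_left[OF z m] nth_sum2 using m by (simp add: sc_mult_tw)
qed

lemma coef_right:
  assumes z: "supp00 z" and m: "m \<in> carrier G0"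
  shows "(MD (hat x) z (m, 0, 0) $$ b) $$ a = sc_mult (carrier G0) (tw (\<lambda>g h. g \<otimes>\<^bsub>G0\<^esub> h) \<beta>) x (coef z b a) m"
proof -
  have "(\<Sum>g\<in>carrier G0. \<Sum>h\<in>carrier G0. if g \<otimes>\<^bsub>G0\<^esub> h = m then (z (h, 0, 0) $$ b) $$ a * (x g * \<beta> g h) else 0)
     = (\<Sum>g\<in>carrier G0. \<Sum>h\<in>carrier G0. if g \<otimes>\<^bsub>G0\<^esub> h = m then x g * coef z b a h * \<beta> g h else 0)"
    by (intro sum.cong refl) (simp add: coef_def mult_ac)
  thus ?thesis unfolding prod_right[OF z m] nth_sum2 using m by (simp add: sc_mult_tw)
qed

end

context MT begin

abbreviation "MA \<equiv> sc_mult (carrier G0) (tw (\<lambda>g h. g \<otimes>\<^bsub>G0\<^esub> h) \<beta>)"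

definition eA where "eA = (SOME e. sc_unit (carrier G0) (tw (\<lambda>g h. g \<otimes>\<^bsub>G0\<^esub> h) \<beta>) e \<and> e \<noteq> (\<lambda>_. 0))"

lemma eA_prop: "sc_unit (carrier G0) (tw (\<lambda>g h. g \<otimes>\<^bsub>G0\<^esub> h) \<beta>) eA \<and> eA \<noteq> (\<lambda>_. 0)"
proof -
  have "\<exists>e. sc_unit (carrier G0) (tw (\<lambda>g h. g \<otimes>\<^bsub>G0\<^esub> h) \<beta>) e \<and> e \<noteq> (\<lambda>_. 0)"
    using cda unfolding sc_central_division_algebra_def sc_division_algebra_def twisted_eq by blast
  thus ?thesis unfolding eA_def by (rule someI_ex)
qed

lemma A_center: "w \<in> sc_center (carrier G0) (tw (\<lambda>g h. g \<otimes>\<^bsub>G0\<^esub> h) \<beta>) \<Longrightarrow> \<exists>a. w = (\<lambda>i. a * eA i)"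
  using cda eA_prop unfolding sc_central_division_algebra_def twisted_eq by blast

lemma eD_center: "eD \<in> sc_center BD (tw opD \<gamma>D)"
  using D_unit by (simp add: sc_center_def sc_unit_def)

lemma center_supp00: "z \<in> sc_center BD (tw opD \<gamma>D) \<Longrightarrow> supp00 z"
  unfolding supp00_def
proof (intro allI impI)
  fix g i j assume z: "z \<in> sc_center BD (tw opD \<gamma>D)" and nz: "z (g, i, j) \<noteq> 0"
  have "(g, i, j) \<in> BD" using z nz by (auto simp: sc_center_def sc_carrier_def)
  thus "i = 0 \<and> j = 0" using center_support[OF z _ nz] by simp
qed

lemma coef_central:
  assumes z: "z \<in> sc_center BD (tw opD \<gamma>D)"
  shows "coef z b a \<in> sc_center (carrier G0) (tw (\<lambda>g h. g \<otimes>\<^bsub>G0\<^esub> h) \<beta>)"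
  unfolding sc_center_def
proof (intro CollectI conjI ballI coef_in)
  fix x :: "'g \<Rightarrow> 'a" assume x: "x \<in> sc_carrier (carrier G0)"
  have s: "supp00 z" by (rule center_supp00[OF z])
  have comm: "MD z (hat x) = MD (hat x) z" using z hat_in by (simp add: sc_center_def)
  show "MA (coef z b a) x = MA x (coef z b a)"
  proof
    fix m show "MA (coef z b a) x m = MA x (coef z b a) m"
    proof (cases "m \<in> carrier G0")
      case True
      show ?thesis using coef_left[OF s True, of x b a] coef_right[OF s True, of x b a] comm by simp
    next
      case False thus ?thesis by (simp add: sc_mult_tw)
    qed
  qed
qed

lemma cross:
  assumes z: "z \<in> sc_center BD (tw opD \<gamma>D)" and g: "g \<in> carrier G0" and g1: "g1 \<in> carrier G0"
  shows "z (g, 0, 0) * emb_KK (eA g1) = z (g1, 0, 0) * emb_KK (eA g)"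
proof -
  have c: "(z (g, 0, 0) $$ b) $$ a * eA g1 = (z (g1, 0, 0) $$ b) $$ a * eA g" for a b
  proof -
    obtain l where l: "coef z b a = (\<lambda>i. l * eA i)" using A_center[OF coef_central[OF z]] by blast
    have "coef z b a g = l * eA g" "coef z b a g1 = l * eA g1" using l by metis+
    thus ?thesis using g g1 by (simp add: coef_def mult_ac)
  qed
  show ?thesis
    by (simp add: fls_eq_iff nth_emb c)
qed

lemma D_center: "sc_center BD (tw opD \<gamma>D) = {(\<lambda>i. a * eD i) | a. True}"
proof
  show "{(\<lambda>i. a * eD i) | a. True} \<subseteq> sc_center BD (tw opD \<gamma>D)"
  proof clarify
    fix a
    have eDc: "eD \<in> sc_carrier BD" using D_unit by (simp add: sc_unit_def)
    have "fsc a eD \<in> sc_center BD (tw opD \<gamma>D)"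
      unfolding sc_center_def
    proof (intro CollectI conjI ballI)
      show "fsc a eD \<in> sc_carrier BD" using eDc by (auto simp: sc_carrier_def fsc_def)
    next
      fix x :: "'g \<times> nat \<times> nat \<Rightarrow> 'a fls fls" assume x: "x \<in> sc_carrier BD"
      show "MD (fsc a eD) x = MD x (fsc a eD)"
        unfolding sc_mult_fsc_left sc_mult_fsc_right using D_unit x by (simp add: sc_unit_def)
    qed
    thus "(\<lambda>i. a * eD i) \<in> sc_center BD (tw opD \<gamma>D)" by (simp add: fsc_def)
  qed
next
  show "sc_center BD (tw opD \<gamma>D) \<subseteq> {(\<lambda>i. a * eD i) | a. True}"
  proof
    fix z assume z: "z \<in> sc_center BD (tw opD \<gamma>D)"
    let ?o = "\<one>\<^bsub>G0\<^esub>"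
    have eD1: "eD (?o, 0, 0) \<noteq> 0" using gD_nz[OF oneD_in oneD_in] by (simp add: eD_def oneD_def)
    have eDg: "eD (g, i, j) = 0" if "(g, i, j) \<noteq> (?o, 0, 0)" for g i j
      using that unfolding eD_def oneD_def by auto
    obtain g1 where g1: "g1 \<in> carrier G0" "eA g1 \<noteq> 0"
      using eA_prop by (auto simp: sc_unit_def sc_carrier_def fun_eq_iff)
    have "eD (?o, 0, 0) * emb_KK (eA g1) = eD (g1, 0, 0) * emb_KK (eA ?o)"
      by (rule cross[OF eD_center one_G g1(1)])
    hence eA1: "eA ?o \<noteq> 0" using eD1 g1(2) by auto
    define L where "L = z (?o, 0, 0) / eD (?o, 0, 0)"
    have "z = (\<lambda>i. L * eD i)"
    proof
      fix u :: "'g \<times> nat \<times> nat"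
      obtain g i j where u: "u = (g, i, j)" by (cases u) auto
      show "z u = L * eD u"
      proof (cases "(g, i, j) \<in> BD \<and> i = 0 \<and> j = 0")
        case True
        hence g: "g \<in> carrier G0" and ij: "i = 0" "j = 0" by (auto simp: BD_def)
        have r1: "z (g, 0, 0) * emb_KK (eA ?o) = z (?o, 0, 0) * emb_KK (eA g)"
          by (rule cross[OF z g one_G])
        have r2: "eD (g, 0, 0) * emb_KK (eA ?o) = eD (?o, 0, 0) * emb_KK (eA g)"
          by (rule cross[OF eD_center g one_G])
        have E: "emb_KK (eA ?o) \<noteq> 0" using eA1 by simp
        have "z (g, 0, 0) = z (?o, 0, 0) * emb_KK (eA g) / emb_KK (eA ?o)"
          using r1 E by (simp add: field_simps)
        moreover have "eD (g, 0, 0) = eD (?o, 0, 0) * emb_KK (eA g) / emb_KK (eA ?o)"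
          using r2 E by (simp add: field_simps)
        ultimately show ?thesis using u ij eD1 by (simp add: L_def field_simps)
      next
        case False
        have z0: "z u = 0"
        proof (rule ccontr)
          assume "z u \<noteq> 0"
          hence "u \<in> BD" using z unfolding sc_center_def sc_carrier_def by blast
          moreover have "i = 0 \<and> j = 0" using center_supp00[OF z] \<open>z u \<noteq> 0\<close> u by (auto simp: supp00_def)
          ultimately show False using False u by simp
        qed
        have "eD u = 0"
        proof (rule ccontr)
          assume "eD u \<noteq> 0"
          hence "u = oneD" by (auto simp: eD_def split: if_splits)
          thus False using False u oneD_in by (simp add: oneD_def)
        qed
        thus ?thesis using z0 by simp
      qed
    qed
    thus "z \<in> {(\<lambda>i. a * eD i) | a. True}" by blast
  qed
qed

end

lemma sc_mult_cong:
  assumes "\<And>i. i \<in> B \<Longrightarrow> x i = x' i" "\<And>i. i \<in> B \<Longrightarrow> y i = y' i"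
  shows "sc_mult B c x y = sc_mult B c x' y'"
  using assms by (auto simp: sc_mult_def fun_eq_iff intro!: sum.cong)

context MT begin

lemma D_cda: "sc_central_division_algebra BD (tw opD \<gamma>D)"
  unfolding sc_central_division_algebra_def sc_division_algebra_def
proof (intro conjI allI impI)
  show "finite BD" by (rule BD_finite)
  show "\<forall>x\<in>sc_carrier BD. \<forall>y\<in>sc_carrier BD. \<forall>z\<in>sc_carrier BD. MD (MD x y) z = MD x (MD y z)"
    by (simp add: D_assoc)
  show "\<exists>e. sc_unit BD (tw opD \<gamma>D) e \<and> e \<noteq> (\<lambda>_. 0) \<and>
        (\<forall>x\<in>sc_carrier BD. x \<noteq> (\<lambda>_. 0) \<longrightarrow> (\<exists>y\<in>sc_carrier BD. MD x y = e \<and> MD y x = e))"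
    using D_unit eD_nz D_division by blast
next
  fix e assume e: "sc_unit BD (tw opD \<gamma>D) e"
  have eDc: "eD \<in> sc_carrier BD" using D_unit by (simp add: sc_unit_def)
  have ec: "e \<in> sc_carrier BD" using e by (simp add: sc_unit_def)
  have "MD e eD = eD" using e eDc by (simp add: sc_unit_def)
  moreover have "MD e eD = e" using D_unit ec by (simp add: sc_unit_def)
  ultimately have "e = eD" by simp
  thus "sc_center BD (tw opD \<gamma>D) = {(\<lambda>i. a * e i) | a. True}" using D_center by simp
qed

abbreviation "PG \<equiv> G0 \<times>\<times> (integer_mod_group n \<times>\<times> integer_mod_group n)"

definition PGc where "PGc = carrier G0 \<times> ({0..<int n} \<times> {0..<int n})"

lemma carrier_PG: "carrier PG = PGc"
  using npos by (simp add: DirProd_def carrier_integer_mod_group PGc_def)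

lemma mult_PG: "(g, i, j) \<otimes>\<^bsub>PG\<^esub> (h, a, b) = (g \<otimes>\<^bsub>G0\<^esub> h, (i + a) mod int n, (j + b) mod int n)"
  using npos by (simp add: DirProd_def integer_mod_group_def)

definition \<sigma> :: "'g \<times> int \<times> int \<Rightarrow> 'g \<times> nat \<times> nat" where
  "\<sigma> = (\<lambda>(g, i, j). (g, nat i, nat j))"

definition \<rho> :: "'g \<times> nat \<times> nat \<Rightarrow> 'g \<times> int \<times> int" where
  "\<rho> = (\<lambda>(g, i, j). (g, int i, int j))"

definition \<alpha> :: "'g \<times> int \<times> int \<Rightarrow> 'g \<times> int \<times> int \<Rightarrow> 'a fls fls" where
  "\<alpha> u v = \<gamma>D (\<sigma> u) (\<sigma> v)"

lemma \<sigma>_bij: "bij_betw \<sigma> PGc BD"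
  by (rule bij_betwI[where g = \<rho>]) (auto simp: \<sigma>_def \<rho>_def PGc_def BD_def)

lemma \<sigma>_in: "u \<in> PGc \<Longrightarrow> \<sigma> u \<in> BD"
  using \<sigma>_bij by (auto simp: bij_betw_def)

lemma \<sigma>_inj: "u \<in> PGc \<Longrightarrow> v \<in> PGc \<Longrightarrow> \<sigma> u = \<sigma> v \<Longrightarrow> u = v"
  using \<sigma>_bij by (auto simp: bij_betw_def inj_on_def)

lemma \<sigma>_mult: "u \<in> PGc \<Longrightarrow> v \<in> PGc \<Longrightarrow> \<sigma> (u \<otimes>\<^bsub>PG\<^esub> v) = opD (\<sigma> u) (\<sigma> v)"
  by (auto simp: PGc_def \<sigma>_def opD_def mult_PG nat_mod_distrib nat_add_distrib)

lemma mult_PG_closed: "u \<in> PGc \<Longrightarrow> v \<in> PGc \<Longrightarrow> u \<otimes>\<^bsub>PG\<^esub> v \<in> PGc"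
  using npos by (auto simp: PGc_def mult_PG intro: m_closed')

lemma \<alpha>_cocycle: "cocycle2 PG \<alpha>"
  unfolding cocycle2_def carrier_PG
proof (intro conjI ballI)
  fix g h assume "g \<in> PGc" "h \<in> PGc"
  thus "\<alpha> g h \<noteq> 0" unfolding \<alpha>_def by (intro gD_nz \<sigma>_in)
next
  fix g h l assume g: "g \<in> PGc" and h: "h \<in> PGc" and l: "l \<in> PGc"
  show "\<alpha> g h * \<alpha> (g \<otimes>\<^bsub>PG\<^esub> h) l = \<alpha> h l * \<alpha> g (h \<otimes>\<^bsub>PG\<^esub> l)"
    unfolding \<alpha>_def \<sigma>_mult[OF g h] \<sigma>_mult[OF h l]
    by (rule gD_coc[OF \<sigma>_in[OF g] \<sigma>_in[OF h] \<sigma>_in[OF l]])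
qed

lemma tw_match: "u \<in> PGc \<Longrightarrow> v \<in> PGc \<Longrightarrow> w \<in> PGc \<Longrightarrow>
   twisted_sc PG \<alpha> u v w = tw opD \<gamma>D (\<sigma> u) (\<sigma> v) (\<sigma> w)"
proof -
  assume u: "u \<in> PGc" and v: "v \<in> PGc" and w: "w \<in> PGc"
  have e: "\<sigma> (u \<otimes>\<^bsub>PG\<^esub> v) = opD (\<sigma> u) (\<sigma> v)" by (rule \<sigma>_mult[OF u v])
  have "(w = u \<otimes>\<^bsub>PG\<^esub> v) = (\<sigma> w = \<sigma> (u \<otimes>\<^bsub>PG\<^esub> v))"
    using \<sigma>_inj[OF w mult_PG_closed[OF u v]] by blast
  thus ?thesis unfolding twisted_sc_def tw_def \<alpha>_def e by simp
qed

definition \<phi> :: "('g \<times> nat \<times> nat \<Rightarrow> 'a fls fls) \<Rightarrow> 'g \<times> int \<times> int \<Rightarrow> 'a fls fls" where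
  "\<phi> x = (\<lambda>w. if w \<in> PGc then x (\<sigma> w) else 0)"

lemma \<phi>_bij: "bij_betw \<phi> (sc_carrier BD) (sc_carrier PGc)"
proof (rule bij_betwI[where g = "\<lambda>y u. if u \<in> BD then y (\<rho> u) else 0"])
  show "\<phi> \<in> sc_carrier BD \<rightarrow> sc_carrier PGc" by (auto simp: \<phi>_def sc_carrier_def)
  show "(\<lambda>y u. if u \<in> BD then y (\<rho> u) else 0) \<in> sc_carrier PGc \<rightarrow> sc_carrier BD"
    by (auto simp: sc_carrier_def)
next
  fix x :: "'g \<times> nat \<times> nat \<Rightarrow> 'a fls fls" assume x: "x \<in> sc_carrier BD"
  show "(\<lambda>u. if u \<in> BD then \<phi> x (\<rho> u) else 0) = x"
  proof
    fix u :: "'g \<times> nat \<times> nat"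
    show "(if u \<in> BD then \<phi> x (\<rho> u) else 0) = x u"
      using x by (cases u) (auto simp: \<phi>_def \<rho>_def \<sigma>_def PGc_def BD_def sc_carrier_def)
  qed
next
  fix y :: "'g \<times> int \<times> int \<Rightarrow> 'a fls fls" assume y: "y \<in> sc_carrier PGc"
  show "\<phi> (\<lambda>u. if u \<in> BD then y (\<rho> u) else 0) = y"
  proof
    fix w :: "'g \<times> int \<times> int"
    show "\<phi> (\<lambda>u. if u \<in> BD then y (\<rho> u) else 0) w = y w"
      using y by (cases w) (auto simp: \<phi>_def \<rho>_def \<sigma>_def PGc_def BD_def sc_carrier_def)
  qed
qed

lemma \<phi>_mult: "\<phi> (MD x y) = sc_mult PGc (twisted_sc PG \<alpha>) (\<phi> x) (\<phi> y)"
proof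
  fix m
  show "\<phi> (MD x y) m = sc_mult PGc (twisted_sc PG \<alpha>) (\<phi> x) (\<phi> y) m"
  proof (cases "m \<in> PGc")
    case False thus ?thesis by (simp add: \<phi>_def sc_mult_def)
  next
    case True
    have inv: "\<phi> f (inv_into PGc \<sigma> i) = f i" if "i \<in> BD" for f i
    proof -
      have "inv_into PGc \<sigma> i \<in> PGc" "\<sigma> (inv_into PGc \<sigma> i) = i"
        using \<sigma>_bij that by (auto simp: bij_betw_def inv_into_into f_inv_into_f)
      thus ?thesis by (simp add: \<phi>_def)
    qed
    have "sc_mult PGc (twisted_sc PG \<alpha>) (\<phi> x) (\<phi> y) m =
        sc_mult BD (tw opD \<gamma>D) (\<lambda>i. \<phi> x (inv_into PGc \<sigma> i)) (\<lambda>i. \<phi> y (inv_into PGc \<sigma> i)) (\<sigma> m)"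
      by (rule sc_mult_reindex[where \<pi>=\<sigma> and B'=PGc and B=BD and c="tw opD \<gamma>D" and c'="twisted_sc PG \<alpha>" and x="\<phi> x" and y="\<phi> y", symmetric, OF \<sigma>_bij tw_match True])
    also have "\<dots> = MD x y (\<sigma> m)" by (rule fun_cong[OF sc_mult_cong]) (simp_all add: inv)
    finally show ?thesis using True by (simp add: \<phi>_def)
  qed
qed

lemma D_iso: "sc_iso BD (tw opD \<gamma>D) PGc (twisted_sc PG \<alpha>)"
  unfolding sc_iso_def
proof (intro exI[of _ \<phi>] conjI ballI allI)
  show "bij_betw \<phi> (sc_carrier BD) (sc_carrier PGc)" by (rule \<phi>_bij)
next
  fix x y :: "'g \<times> nat \<times> nat \<Rightarrow> 'a fls fls"
  show "\<phi> (\<lambda>i. x i + y i) = (\<lambda>j. \<phi> x j + \<phi> y j)" by (auto simp: \<phi>_def)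
  show "\<phi> (MD x y) = sc_mult PGc (twisted_sc PG \<alpha>) (\<phi> x) (\<phi> y)" by (rule \<phi>_mult)
next
  fix a and x :: "'g \<times> nat \<times> nat \<Rightarrow> 'a fls fls"
  show "\<phi> (\<lambda>i. a * x i) = (\<lambda>j. a * \<phi> x j)" by (auto simp: \<phi>_def)
qed

lemma \<alpha>00: "g \<in> carrier G0 \<Longrightarrow> h \<in> carrier G0 \<Longrightarrow> \<alpha> (g, 0, 0) (h, 0, 0) = emb_KK (\<beta> g h)"
  by (simp add: \<alpha>_def \<sigma>_def gD00)

end

theorem mainTheorem7:
  fixes p r :: nat
    and G0 :: "('g, 'x) monoid_scheme"
    and \<zeta> :: "'a::field"
    and \<beta> :: "'g \<Rightarrow> 'g \<Rightarrow> 'a"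
  assumes "prime p" and "r \<ge> 1"
    and "group G0" and "finite (carrier G0)"
    and "\<zeta> ^ (p ^ r) = 1" and "\<forall>m. 0 < m \<and> m < p ^ r \<longrightarrow> \<zeta> ^ m \<noteq> 1"
    and "cocycle2 G0 \<beta>"
    and "sc_central_division_algebra (carrier G0) (twisted_sc G0 \<beta>)"
  shows "sc_central_division_algebra (carrier G0 \<times> symbol_basis (p ^ r))
           (sc_tensor (sc_base_change emb_KK (twisted_sc G0 \<beta>))
                      (symbol_sc (p ^ r) (emb_KK \<zeta>) var_s var_t))
       \<and> (\<exists>\<alpha> :: ('g \<times> int \<times> int) \<Rightarrow> ('g \<times> int \<times> int) \<Rightarrow> 'a fls fls.
            cocycle2 (G0 \<times>\<times> (integer_mod_group (p ^ r) \<times>\<times> integer_mod_group (p ^ r))) \<alpha>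
          \<and> sc_iso (carrier G0 \<times> symbol_basis (p ^ r))
                   (sc_tensor (sc_base_change emb_KK (twisted_sc G0 \<beta>))
                              (symbol_sc (p ^ r) (emb_KK \<zeta>) var_s var_t))
                   (carrier (G0 \<times>\<times> (integer_mod_group (p ^ r) \<times>\<times> integer_mod_group (p ^ r))))
                   (twisted_sc (G0 \<times>\<times> (integer_mod_group (p ^ r) \<times>\<times> integer_mod_group (p ^ r))) \<alpha>)
          \<and> (\<exists>\<mu> :: 'g \<Rightarrow> 'a fls fls. (\<forall>g\<in>carrier G0. \<mu> g \<noteq> 0) \<and>
               (\<forall>g\<in>carrier G0. \<forall>h\<in>carrier G0.
                  \<alpha> (g, 0, 0) (h, 0, 0)
                    = emb_KK (\<beta> g h) * \<mu> g * \<mu> h / \<mu> (g \<otimes>\<^bsub>G0\<^esub> h))))"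
proof -
  have p2: "2 \<le> p" using assms(1) by (simp add: prime_ge_2_nat)
  have n2: "2 \<le> p ^ r"
  proof -
    have "p \<le> p ^ r" using assms(2) p2 by (simp add: self_le_power)
    thus ?thesis using p2 by simp
  qed
  interpret M: MT G0 "p ^ r" \<zeta> \<beta>
    using assms n2 by (simp add: MT_def)
  have BDeq: "carrier G0 \<times> symbol_basis (p ^ r) = M.BD" by (simp add: M.BD_def symbol_basis_def)
  show ?thesis
    unfolding BDeq M.cD_eq M.carrier_PG
  proof (intro conjI exI[of _ M.\<alpha>] exI[of _ "\<lambda>_. 1"] ballI)
    show "sc_central_division_algebra M.BD (tw M.opD M.\<gamma>D)" by (rule M.D_cda)
    show "cocycle2 (G0 \<times>\<times> integer_mod_group (p ^ r) \<times>\<times> integer_mod_group (p ^ r)) M.\<alpha>"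
      by (rule M.\<alpha>_cocycle)
    show "sc_iso M.BD (tw M.opD M.\<gamma>D) M.PGc (twisted_sc (G0 \<times>\<times> integer_mod_group (p ^ r) \<times>\<times> integer_mod_group (p ^ r)) M.\<alpha>)"
      by (rule M.D_iso)
  next
    fix g assume "g \<in> carrier G0"
    show "(1::'a fls fls) \<noteq> 0" by simp
  next
    fix g h assume "g \<in> carrier G0" "h \<in> carrier G0"
    thus "M.\<alpha> (g, 0, 0) (h, 0, 0) = emb_KK (\<beta> g h) * 1 * 1 / 1" by (simp add: M.\<alpha>00)
  qed
qed

end
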